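(* Let the data $y\in\mathbb{R}^n$, $X\in\mathbb{R}^{n\times p}$, $Z\in\mathbb{R}^{n\times q}$ be fixed, with $Z^TZ$ and $X^TP_ZX$ non-singular, where $P_Z=Z(Z^TZ)^{-1}Z^T$. Let $X=U_X\Sigma_XV_X^T$, $Z=U_Z\Sigma_ZV_Z^T$ be thin singular value decompositions. Let $\delta\in(0,1)$, $\varepsilon\in(0,1/3]$, and let $\Pi\in\mathbb{R}^{m\times n}$ be a countsketch matrix with $m\ge\max\{q(q+1),2pq\}/(\varepsilon^2\delta)$. Suppose $\sigma_{\min}^2(U_Z^TU_X)\ge 16\varepsilon(1+\varepsilon)/(1-\varepsilon)$ and let $\sigma^*:=[\sigma_{\min}(X)\sigma_{\min}^2(U_Z^TU_X)]^{-1}$. Then with probability at least $1-\delta$, $$\|\widetilde\beta_{2SLS}-\widehat\beta_{2SLS}\|\le\frac{4\varepsilon}{1-\varepsilon}\left[2+3\frac{\|\widehat e\|}{\sqrt p}\right]\sigma^*.$$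
   Context: $\widehat\beta_{2SLS}=(X^TP_ZX)^{-1}X^TP_Zy$, $\widehat e=y-X\widehat\beta_{2SLS}$, and $\widetilde\beta_{2SLS}=(\widetilde X^TP_{\widetilde Z}\widetilde X)^{-1}\widetilde X^TP_{\widetilde Z}\widetilde y$ with $\widetilde X=\Pi X$, $\widetilde Z=\Pi Z$, $\widetilde y=\Pi y$. Countsketch: $\Pi$ has i.i.d. columns, each with exactly one nonzero entry, in a uniformly random row, equal to $\pm1$ with equal probability. $\sigma_{\min}$ denotes the smallest singular value. *)

theory Defs
  imports "HOL-Probability.Probability"
begin

definition proj :: "real^'q^'n \<Rightarrow> real^'n^'n" where
  "proj Z = Z ** matrix_inv (transpose Z ** Z) ** transpose Z"

definition tsls :: "real^'n \<Rightarrow> real^'p^'n \<Rightarrow> real^'q^'n \<Rightarrow> real^'p" where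
  "tsls y X Z = (matrix_inv (transpose X ** proj Z ** X) ** transpose X ** proj Z) *v y"

text \<open>Smallest singular value of A (with at least as many rows as columns):
  square root of the smallest eigenvalue of A^T A.\<close>
definition sigma_min :: "real^'c^'r \<Rightarrow> real" where
  "sigma_min A = sqrt (Min {l. \<exists>v. v \<noteq> 0 \<and> (transpose A ** A) *v v = l *\<^sub>R v})"

text \<open>Thin SVD with r = number of columns (full column rank case).\<close>
definition thin_svd :: "real^'c^'r \<Rightarrow> real^'c^'r \<Rightarrow> real^'c^'c \<Rightarrow> real^'c^'c \<Rightarrow> bool" where
  "thin_svd A U S V \<longleftrightarrow> transpose U ** U = mat 1 \<and> transpose V ** V = mat 1 \<and>
     (\<forall>i j. i \<noteq> j \<longrightarrow> S $ i $ j = 0) \<and> (\<forall>i. S $ i $ i \<ge> 0) \<and>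
     A = U ** S ** transpose V"

text \<open>Countsketch: for each column j, a row h j (uniform) and a sign s j (uniform), all independent.
  This is the uniform distribution on the finite set of such pairs of functions.\<close>
definition countsketch_pmf :: "('n::finite \<Rightarrow> 'm::finite \<times> bool) pmf" where
  "countsketch_pmf = pmf_of_set UNIV"

definition countsketch_matrix :: "('n::finite \<Rightarrow> 'm::finite \<times> bool) \<Rightarrow> real^'n^'m" where
  "countsketch_matrix \<omega> = (\<chi> i j. if fst (\<omega> j) = i then (if snd (\<omega> j) then 1 else -1) else 0)"

end

theory Submission
  imports Defs
begin


lemma minv: assumes "invertible (A::real^'n^'m)"
  shows "A ** matrix_inv A = mat 1" "matrix_inv A ** A = mat 1"
proof -
  have "\<exists>A'. A ** A' = mat 1 \<and> A' ** A = mat 1" using assms unfolding invertible_def by blast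
  then have "A ** matrix_inv A = mat 1 \<and> matrix_inv A ** A = mat 1"
    unfolding matrix_inv_def by (rule someI_ex)
  then show "A ** matrix_inv A = mat 1" "matrix_inv A ** A = mat 1" by auto
qed

lemma minv_unique: assumes "invertible (A::real^'n^'m)" "A ** B = mat 1"
  shows "matrix_inv A = B"
proof -
  have "matrix_inv A = matrix_inv A ** (A ** B)" using assms(2) by simp
  also have "\<dots> = (matrix_inv A ** A) ** B" by (simp add: matrix_mul_assoc)
  also have "\<dots> = B" using minv(2)[OF assms(1)] by simp
  finally show ?thesis .
qed

lemma inj_invertible: assumes "\<And>x. (A::real^'n^'n) *v x = 0 \<Longrightarrow> x = 0"
  shows "invertible A"
proof -
  have "\<exists>B. B ** A = mat 1" using assms by (simp add: matrix_left_invertible_ker)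
  then show ?thesis by (simp add: invertible_left_inverse)
qed

lemma norm_sq_vec: "norm (x::real^'n)^2 = (\<Sum>i\<in>UNIV. (x$i)^2)"
  unfolding norm_vec_def L2_set_def by (simp add: sum_nonneg)

lemma norm_sq_mat: "norm (M::real^'c^'r)^2 = (\<Sum>i\<in>UNIV. norm (M$i)^2)"
  by (simp add: norm_vec_def L2_set_def sum_nonneg)

lemma norm_mv_le: "norm ((M::real^'c^'r) *v v) \<le> norm M * norm v"
proof -
  have "norm (M *v v)^2 = (\<Sum>i\<in>UNIV. (inner (M$i) v)^2)"
    by (simp add: norm_sq_vec matrix_vector_mul_component)
  also have "\<dots> \<le> (\<Sum>i\<in>UNIV. norm (M$i)^2 * norm v^2)"
  proof (rule sum_mono)
    fix i
    have "\<bar>inner (M$i) v\<bar> \<le> norm (M$i) * norm v" by (rule Cauchy_Schwarz_ineq2)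
    then have "\<bar>inner (M$i) v\<bar>^2 \<le> (norm (M$i) * norm v)^2" by (rule power_mono) simp
    then show "(inner (M$i) v)^2 \<le> norm (M$i)^2 * norm v^2" by (simp add: power_mult_distrib)
  qed
  also have "\<dots> = (norm M * norm v)^2"
    by (simp add: norm_sq_mat power_mult_distrib sum_distrib_right)
  finally have "norm (M *v v)^2 \<le> (norm M * norm v)^2" .
  then show ?thesis by (rule power2_le_imp_le) simp
qed

lemma inner_mv: "inner ((M::real^'c^'r) *v x) y = inner x (transpose M *v y)"
proof -
  have "inner x (transpose M *v y) = inner (y v* M) x" by (simp add: inner_commute)
  also have "\<dots> = inner y (M *v x)" by (rule dot_lmul_matrix)
  also have "\<dots> = inner (M *v x) y" by (rule inner_commute)
  finally show ?thesis by simp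
qed

lemma orth_norm: assumes "transpose U ** (U::real^'c^'r) = mat 1"
  shows "norm (U *v z) = norm z"
proof -
  have "inner (U *v z) (U *v z) = inner z z"
    by (simp add: inner_mv matrix_vector_mul_assoc assms)
  then show ?thesis by (simp add: norm_eq_sqrt_inner)
qed

lemma bessel: assumes "transpose U ** (U::real^'c^'r) = mat 1"
  shows "norm (transpose U *v v) \<le> norm v"
proof -
  let ?z = "transpose U *v v"
  have "norm ?z ^2 = inner (U *v ?z) v"
    by (simp add: inner_mv power2_norm_eq_inner)
  also have "\<dots> \<le> norm ?z * norm v"
    using Cauchy_Schwarz_ineq2[of "U *v ?z" v] orth_norm[OF assms] by simp
  finally have "norm ?z ^2 \<le> norm ?z * norm v" .
  then show ?thesis
  proof (cases "norm ?z = 0")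
    case True then show ?thesis by simp
  next
    case False
    then have "norm ?z > 0" by simp
    moreover have "norm ?z * norm ?z \<le> norm ?z * norm v" using \<open>norm ?z ^2 \<le> _\<close> by (simp add: power2_eq_square)
    ultimately show ?thesis by simp
  qed
qed

lemma quad_zero: assumes "\<And>t::real. 0 \<le> 2*t*a + t^2*b" shows "a = 0"
proof -
  define c where "c = 1/(\<bar>b\<bar>+1)"
  have c: "c > 0" "c * \<bar>b\<bar> \<le> 1" unfolding c_def by (auto simp: field_simps)
  have "0 \<le> 2*(-a*c)*a + (-a*c)^2*b" by (rule assms)
  also have "\<dots> = a^2*c*(c*b - 2)" by (simp add: power2_eq_square algebra_simps)
  finally have "0 \<le> a^2*c*(c*b - 2)" .
  moreover have "c*b - 2 < 0" using c abs_le_D1[of b] by (smt (verit) abs_ge_self mult_left_mono)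
  ultimately have "a^2*c \<le> 0" by (smt (verit) mult_nonneg_nonpos zero_le_mult_iff)
  then have "a^2 \<le> 0" using c by (simp add: mult_le_0_iff)
  then show ?thesis by simp
qed

lemma norm_add_scale_sq:
  fixes x w :: "'a::real_inner"
  shows "norm (x + t *\<^sub>R w)^2 = norm x^2 + 2*t*inner w x + t^2*norm w^2"
  unfolding power2_norm_eq_inner
  by (simp add: inner_add_left inner_add_right inner_commute algebra_simps power2_eq_square)

lemma sigma_min_props:
  fixes M :: "real^'c^'r"
  defines "L \<equiv> {l. \<exists>v. v \<noteq> 0 \<and> (transpose M ** M) *v v = l *\<^sub>R v}"
  shows "finite L" "L \<noteq> {}" "Min L \<ge> 0" "\<And>x. Min L * norm x^2 \<le> norm (M *v x)^2"
    "sigma_min M ^2 = Min L" "\<And>x. norm x = 1 \<Longrightarrow> Min L \<le> norm (M *v x)^2"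
proof -
  let ?B = "transpose M ** M"
  have Bsym: "inner (?B *v x) y = inner x (?B *v y)" for x y
    by (metis inner_mv matrix_transpose_mul transpose_transpose)
  have Bq: "inner x (?B *v x) = norm (M *v x)^2" for x
    by (metis inner_mv matrix_vector_mul_assoc power2_norm_eq_inner)
  have evpos: "l \<ge> 0" if "l \<in> L" for l
  proof -
    from that obtain v where v: "v \<noteq> 0" "?B *v v = l *\<^sub>R v" by (auto simp: L_def)
    have "l * norm v^2 = norm (M *v v)^2" using Bq[of v] v by (simp add: power2_norm_eq_inner)
    moreover have "norm v^2 > 0" using v by simp
    ultimately have "l = norm (M *v v)^2 / norm v^2" by (simp add: field_simps)
    then show ?thesis by simp
  qed
  define ev where "ev l = (SOME v. v \<noteq> 0 \<and> ?B *v v = l *\<^sub>R v)" for l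
  have ev: "ev l \<noteq> 0 \<and> ?B *v ev l = l *\<^sub>R ev l" if "l \<in> L" for l
  proof -
    from that obtain v where "v \<noteq> 0 \<and> ?B *v v = l *\<^sub>R v" by (auto simp: L_def)
    then show ?thesis unfolding ev_def by (rule someI)
  qed
  have inj: "inj_on ev L"
  proof (rule inj_onI)
    fix l l' assume "l \<in> L" "l' \<in> L" "ev l = ev l'"
    then have "l *\<^sub>R ev l = l' *\<^sub>R ev l" "ev l \<noteq> 0" using ev by metis+
    then show "l = l'" by (metis scaleR_cancel_right)
  qed
  have orth: "pairwise orthogonal (ev ` L)"
    unfolding pairwise_def
  proof clarify
    fix l l' assume ll: "l \<in> L" "l' \<in> L" "ev l \<noteq> ev l'"
    then have "l \<noteq> l'" by auto
    have "l * inner (ev l) (ev l') = inner (?B *v ev l) (ev l')" using ev[OF ll(1)] by simp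
    also have "\<dots> = inner (ev l) (?B *v ev l')" by (rule Bsym)
    also have "\<dots> = l' * inner (ev l) (ev l')" using ev[OF ll(2)] by simp
    finally show "orthogonal (ev l) (ev l')" using \<open>l \<noteq> l'\<close> unfolding orthogonal_def by auto
  qed
  have "0 \<notin> ev ` L" using ev by auto
  then have "independent (ev ` L)" using orth pairwise_orthogonal_independent by blast
  then have "finite (ev ` L)" using independent_bound by blast
  then show fin: "finite L" using inj finite_imageD by blast
  \<comment> \<open>Rayleigh minimiser\<close>
  have cont: "continuous_on (sphere 0 1) (\<lambda>x. norm (M *v x)^2)"
    by (intro continuous_intros linear_continuous_on matrix_vector_mul_bounded_linear)
  have ne: "sphere (0::real^'c) 1 \<noteq> {}" by simp
  obtain x0 where x0: "x0 \<in> sphere (0::real^'c) 1" "\<And>y. y \<in> sphere 0 1 \<Longrightarrow> norm (M *v x0)^2 \<le> norm (M *v y)^2"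
    using continuous_attains_inf[OF compact_sphere ne cont] by blast
  define \<mu> where "\<mu> = norm (M *v x0)^2"
  have nx0: "norm x0 = 1" using x0 by simp
  have ray: "\<mu> * norm y^2 \<le> norm (M *v y)^2" for y
  proof (cases "y = 0")
    case True then show ?thesis by simp
  next
    case False
    then have "(1/norm y) *\<^sub>R y \<in> sphere 0 1" by simp
    from x0(2)[OF this] have "\<mu> \<le> (norm (M *v y) / norm y)^2"
      by (simp add: \<mu>_def matrix_vector_mult_scaleR)
    then show ?thesis using False by (simp add: field_simps power_divide)
  qed
  have eig: "?B *v x0 = \<mu> *\<^sub>R x0"
  proof -
    define w where "w = ?B *v x0 - \<mu> *\<^sub>R x0"
    have "0 \<le> 2*t*(inner w (?B *v x0) - \<mu> * inner w x0) + t^2*(norm (M *v w)^2 - \<mu>*norm w^2)" for t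
    proof -
      have "\<mu> * norm (x0 + t *\<^sub>R w)^2 \<le> norm (M *v (x0 + t *\<^sub>R w))^2" by (rule ray)
      moreover have "norm (x0 + t *\<^sub>R w)^2 = 1 + 2*t*inner w x0 + t^2 * norm w^2"
        using nx0 by (simp add: norm_add_scale_sq)
      moreover have "norm (M *v (x0 + t *\<^sub>R w))^2 = \<mu> + 2*t*inner w (?B *v x0) + t^2 * norm (M *v w)^2"
      proof -
        have "inner (M *v x0) (M *v w) = inner w (?B *v x0)"
          by (metis inner_commute inner_mv matrix_vector_mul_assoc)
        moreover have "M *v (x0 + t *\<^sub>R w) = M *v x0 + t *\<^sub>R (M *v w)"
          by (simp add: matrix_vector_right_distrib matrix_vector_mult_scaleR)
        ultimately show ?thesis
          by (simp add: \<mu>_def norm_add_scale_sq inner_commute)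
      qed
      ultimately show ?thesis by (simp add: algebra_simps)
    qed
    then have "inner w (?B *v x0) - \<mu> * inner w x0 = 0" by (rule quad_zero)
    then have "inner w w = 0" unfolding w_def by (simp add: inner_diff_right)
    then show ?thesis unfolding w_def by simp
  qed
  have muL: "\<mu> \<in> L" unfolding L_def using eig nx0 by (auto intro!: exI[of _ x0])
  then show "L \<noteq> {}" by auto
  have "Min L \<le> \<mu>" using fin muL by simp
  have MinL: "Min L \<in> L" using fin muL Min_in by blast
  then show "Min L \<ge> 0" using evpos by blast
  show "Min L * norm x^2 \<le> norm (M *v x)^2" for x
    using ray[of x] \<open>Min L \<le> \<mu>\<close> by (meson mult_right_mono order_trans zero_le_power2)
  then show "Min L \<le> norm (M *v x)^2" if "norm x = 1" for x using that by (metis mult_1_right power_one)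
  show "sigma_min M ^2 = Min L" unfolding sigma_min_def L_def[symmetric]
    using \<open>Min L \<ge> 0\<close> by simp
qed


lemma sigma_min_nonneg: "sigma_min (M::real^'c^'r) \<ge> 0"
  unfolding sigma_min_def using sigma_min_props(3)[of M] by simp

lemma sigma_min_le: "sigma_min (M::real^'c^'r) * norm x \<le> norm (M *v x)"
proof -
  have "(sigma_min M * norm x)^2 \<le> norm (M *v x)^2"
    using sigma_min_props(4)[of M x] sigma_min_props(5)[of M] by (simp add: power_mult_distrib)
  then show ?thesis by (rule power2_le_imp_le) simp
qed

lemma sigma_min_pos:
  fixes M :: "real^'c^'r"
  assumes inj: "\<And>x. M *v x = 0 \<Longrightarrow> x = 0"
  shows "sigma_min M > 0"
proof -
  define L where "L = {l. \<exists>v. v \<noteq> 0 \<and> (transpose M ** M) *v v = l *\<^sub>R v}"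
  have "finite L" "L \<noteq> {}" unfolding L_def using sigma_min_props(1,2)[of M] by auto
  then have "Min L \<in> L" by (rule Min_in)
  then obtain v where v: "v \<noteq> 0" "(transpose M ** M) *v v = Min L *\<^sub>R v" unfolding L_def by auto
  have "inner v ((transpose M ** M) *v v) = norm (M *v v)^2"
    by (metis inner_mv matrix_vector_mul_assoc power2_norm_eq_inner)
  then have "Min L * norm v^2 = norm (M *v v)^2" using v(2) by (simp add: power2_norm_eq_inner)
  moreover have "norm (M *v v)^2 > 0" using inj v(1) by auto
  moreover have "norm v^2 > 0" using v(1) by simp
  ultimately have "Min L > 0" by (metis zero_less_mult_pos2)
  then show ?thesis unfolding sigma_min_def L_def[symmetric] by simp
qed



definition sg :: "('n \<Rightarrow> 'm \<times> bool) \<Rightarrow> 'n \<Rightarrow> real" where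
  "sg \<omega> i = (if snd (\<omega> i) then 1 else -1)"

definition Dm :: "('n \<Rightarrow> 'm \<times> bool) \<Rightarrow> 'n \<Rightarrow> 'n \<Rightarrow> real" where
  "Dm \<omega> i j = (if i \<noteq> j \<and> fst (\<omega> i) = fst (\<omega> j) then sg \<omega> i * sg \<omega> j else 0)"

definition fl :: "'n \<Rightarrow> ('n \<Rightarrow> 'm \<times> bool) \<Rightarrow> ('n \<Rightarrow> 'm \<times> bool)" where
  "fl t \<omega> = fun_upd \<omega> t (fst (\<omega> t), Not (snd (\<omega> t)))"

lemma fl_fl[simp]: "fl t (fl t \<omega>) = \<omega>"
  by (auto simp: fl_def)

lemma sum_fl: "(\<Sum>\<omega>\<in>UNIV. f (fl t \<omega>)) = (\<Sum>\<omega>\<in>(UNIV::('n::finite \<Rightarrow> 'm::finite \<times> bool) set). (f \<omega>::real))"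
  by (rule sum.reindex_bij_witness[of _ "fl t" "fl t"]) auto

lemma sum_flip_zero: assumes "\<And>\<omega>. f (fl t \<omega>) = - f \<omega>"
  shows "(\<Sum>\<omega>\<in>(UNIV::('n::finite \<Rightarrow> 'm::finite \<times> bool) set). (f \<omega>::real)) = 0"
proof -
  have "(\<Sum>\<omega>\<in>(UNIV::('n \<Rightarrow> 'm \<times> bool) set). f \<omega>) = (\<Sum>\<omega>\<in>UNIV. f (fl t \<omega>))" by (rule sum_fl[symmetric])
  also have "\<dots> = - (\<Sum>\<omega>\<in>UNIV. f \<omega>)" by (simp add: assms sum_negf)
  finally show ?thesis by simp
qed

lemma sg_fl: "sg (fl t \<omega>) i = (if i = t then - sg \<omega> i else sg \<omega> i)"
  by (auto simp: sg_def fl_def)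

lemma fst_fl[simp]: "fst (fl t \<omega> i) = fst (\<omega> i)"
  by (simp add: fl_def)

lemma Dm_fl: "Dm (fl t \<omega>) i j = (if t = i \<or> t = j then - Dm \<omega> i j else Dm \<omega> i j)"
  unfolding Dm_def fst_fl sg_fl by auto

lemma sum_resample:
  fixes F :: "('n::finite \<Rightarrow> 'm::finite \<times> bool) \<Rightarrow> real"
  shows "(\<Sum>\<omega>\<in>UNIV. F \<omega>) = (\<Sum>\<omega>0\<in>{\<omega>. \<omega> j = c0}. \<Sum>c\<in>UNIV. F (\<omega>0(j := c)))"
proof -
  have "(\<Sum>\<omega>\<in>UNIV. F \<omega>) = (\<Sum>p\<in>{\<omega>. \<omega> j = c0} \<times> UNIV. F ((fst p)(j := snd p)))"
    by (rule sum.reindex_bij_witness[of _ "\<lambda>p. (fst p)(j := snd p)" "\<lambda>\<omega>. (fun_upd \<omega> j c0, \<omega> j)"]) auto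
  also have "\<dots> = (\<Sum>\<omega>0\<in>{\<omega>. \<omega> j = c0}. \<Sum>c\<in>UNIV. F (\<omega>0(j := c)))"
    by (simp add: sum.cartesian_product split_def)
  finally show ?thesis .
qed

lemma card_fst: "(\<Sum>c\<in>(UNIV::('m::finite \<times> bool) set). (if r = fst c then 1 else 0::real)) = 2"
proof -
  have "(\<Sum>c\<in>(UNIV::('m \<times> bool) set). (if r = fst c then 1 else 0::real)) = real (card {c::'m\<times>bool. r = fst c})"
    by (simp add: sum.If_cases)
  also have "{c::'m\<times>bool. r = fst c} = {(r,True),(r,False)}" by auto
  finally show ?thesis by simp
qed

lemma count_coll:
  assumes "i \<noteq> j"
  shows "(\<Sum>\<omega>\<in>(UNIV::('n::finite \<Rightarrow> 'm::finite \<times> bool) set). (if fst (\<omega> i) = fst (\<omega> j) then 1 else 0::real))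
     = real (card (UNIV::('n \<Rightarrow> 'm \<times> bool) set)) / real CARD('m)"
proof -
  obtain c0 :: "'m \<times> bool" where True by blast
  let ?B = "{\<omega>::'n \<Rightarrow> 'm \<times> bool. \<omega> j = c0}"
  have "(\<Sum>\<omega>\<in>(UNIV::('n \<Rightarrow> 'm \<times> bool) set). (if fst (\<omega> i) = fst (\<omega> j) then 1 else 0::real))
       = (\<Sum>\<omega>0\<in>?B. \<Sum>c\<in>UNIV. (if fst (\<omega>0 i) = fst (c::'m\<times>bool) then 1 else 0))"
    apply (subst sum_resample[of _ j c0])
    using assms by (intro sum.cong refl) auto
  also have "\<dots> = (\<Sum>\<omega>0\<in>?B. 2)"
    by (simp only: card_fst)
  finally have 1: "(\<Sum>\<omega>\<in>(UNIV::('n \<Rightarrow> 'm \<times> bool) set). (if fst (\<omega> i) = fst (\<omega> j) then 1 else 0::real)) = 2 * real (card ?B)"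
    by (simp only: sum_constant of_nat_numeral)
  have "real (card (UNIV::('n \<Rightarrow> 'm \<times> bool) set)) = (\<Sum>\<omega>\<in>(UNIV::('n \<Rightarrow> 'm \<times> bool) set). 1)" by simp
  also have "\<dots> = (\<Sum>\<omega>0\<in>?B. \<Sum>c\<in>(UNIV::('m \<times> bool) set). 1)" by (rule sum_resample)
  also have "\<dots> = real (card ?B) * (2 * real CARD('m))"
  proof -
    have c: "card (UNIV :: ('m \<times> bool) set) = CARD('m) * 2"
      by (metis UNIV_Times_UNIV card_UNIV_bool card_cartesian_product)
    show ?thesis by (simp only: sum_constant c)
  qed
  finally have 2: "real (card (UNIV::('n \<Rightarrow> 'm \<times> bool) set)) = real (card ?B) * (2 * real CARD('m))" .
  have "real CARD('m) > 0" by simp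
  then show ?thesis unfolding 1 2 by (simp add: field_simps)
qed

lemma sg_sq[simp]: "sg \<omega> i * sg \<omega> i = 1"
  by (simp add: sg_def)

lemma DD_sum:
  fixes i j k l :: "'n::finite"
  shows "(\<Sum>\<omega>\<in>(UNIV::('n \<Rightarrow> 'm::finite \<times> bool) set). Dm \<omega> i j * Dm \<omega> k l)
    = real (card (UNIV::('n \<Rightarrow> 'm \<times> bool) set)) / real CARD('m) *
      (if i \<noteq> j \<and> ((k = i \<and> l = j) \<or> (k = j \<and> l = i)) then 1 else 0)"
proof (cases "i = j")
  case True then show ?thesis by (simp add: Dm_def)
next
  case ij: False
  show ?thesis
  proof (cases "(k = i \<and> l = j) \<or> (k = j \<and> l = i)")
    case True
    have "Dm \<omega> i j * Dm \<omega> k l = (if fst (\<omega> i) = fst (\<omega> j) then 1 else 0)" for \<omega> :: "'n \<Rightarrow> 'm \<times> bool"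
      using True ij by (auto simp: Dm_def sg_def)
    then show ?thesis using count_coll[OF ij] True ij by simp
  next
    case False
    show ?thesis
    proof (cases "k = l")
      case True then show ?thesis using ij by (auto simp: Dm_def)
    next
      case kl: False
      define t where "t = (if i \<noteq> k \<and> i \<noteq> l then i else j)"
      have t: "(t = i \<or> t = j) \<and> \<not> (t = k \<or> t = l)" using False ij kl unfolding t_def by auto
      have "(\<Sum>\<omega>\<in>(UNIV::('n \<Rightarrow> 'm \<times> bool) set). Dm \<omega> i j * Dm \<omega> k l) = 0"
        by (rule sum_flip_zero[of _ t]) (use t in \<open>auto simp: Dm_fl\<close>)
      then show ?thesis using False by simp
    qed
  qed
qed

lemma swap4:
  "(\<Sum>\<omega>\<in>A. \<Sum>i\<in>B. \<Sum>j\<in>C. \<Sum>k\<in>D. \<Sum>l\<in>E. F \<omega> i j k l) =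
   (\<Sum>i\<in>B. \<Sum>j\<in>C. \<Sum>k\<in>D. \<Sum>l\<in>E. \<Sum>\<omega>\<in>A. (F \<omega> i j k l::real))"
proof -
  have "(\<Sum>\<omega>\<in>A. \<Sum>i\<in>B. \<Sum>j\<in>C. \<Sum>k\<in>D. \<Sum>l\<in>E. F \<omega> i j k l) =
        (\<Sum>i\<in>B. \<Sum>\<omega>\<in>A. \<Sum>j\<in>C. \<Sum>k\<in>D. \<Sum>l\<in>E. F \<omega> i j k l)" by (rule sum.swap)
  also have "\<dots> = (\<Sum>i\<in>B. \<Sum>j\<in>C. \<Sum>\<omega>\<in>A. \<Sum>k\<in>D. \<Sum>l\<in>E. F \<omega> i j k l)"
    by (rule sum.cong[OF refl], rule sum.swap)
  also have "\<dots> = (\<Sum>i\<in>B. \<Sum>j\<in>C. \<Sum>k\<in>D. \<Sum>\<omega>\<in>A. \<Sum>l\<in>E. F \<omega> i j k l)"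
    by (rule sum.cong[OF refl], rule sum.cong[OF refl], rule sum.swap)
  also have "\<dots> = (\<Sum>i\<in>B. \<Sum>j\<in>C. \<Sum>k\<in>D. \<Sum>l\<in>E. \<Sum>\<omega>\<in>A. F \<omega> i j k l)"
    by (rule sum.cong[OF refl], rule sum.cong[OF refl], rule sum.cong[OF refl], rule sum.swap)
  finally show ?thesis .
qed

lemma delta2:
  fixes c :: "'n::finite \<Rightarrow> 'n \<Rightarrow> real"
  assumes "i \<noteq> j"
  shows "(\<Sum>k\<in>UNIV. \<Sum>l\<in>UNIV. c k l * (if (k = i \<and> l = j) \<or> (k = j \<and> l = i) then 1 else 0)) = c i j + c j i"
proof -
  have "(\<Sum>k\<in>UNIV. \<Sum>l\<in>UNIV. c k l * (if (k = i \<and> l = j) \<or> (k = j \<and> l = i) then 1 else 0))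
      = (\<Sum>k\<in>UNIV. \<Sum>l\<in>UNIV. (if k = i \<and> l = j then c k l else 0) + (if k = j \<and> l = i then c k l else 0))"
    using assms by (intro sum.cong refl) auto
  also have "\<dots> = (\<Sum>k\<in>UNIV. \<Sum>l\<in>UNIV. (if k = i \<and> l = j then c k l else 0)) + (\<Sum>k\<in>UNIV. \<Sum>l\<in>UNIV. (if k = j \<and> l = i then c k l else 0))"
    by (simp only: sum.distrib)
  also have "\<dots> = c i j + c j i"
  proof -
    have dd: "(\<Sum>k\<in>UNIV. \<Sum>l\<in>UNIV. (if k = i' \<and> l = j' then c k l else 0)) = c i' j'" for i' j'
    proof -
      have "(\<Sum>k\<in>UNIV. \<Sum>l\<in>UNIV. (if k = i' \<and> l = j' then c k l else 0)) = (\<Sum>k\<in>UNIV. if k = i' then c k j' else 0)"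
      proof (rule sum.cong[OF refl])
        fix k show "(\<Sum>l\<in>UNIV. (if k = i' \<and> l = j' then c k l else 0)) = (if k = i' then c k j' else 0)"
          by (cases "k = i'") simp_all
      qed
      also have "\<dots> = c i' j'" by simp
      finally show ?thesis .
    qed
    show ?thesis by (simp only: dd)
  qed
  finally show ?thesis .
qed

lemma quad_moment:
  fixes a b :: "real^'n::finite"
  shows "(\<Sum>\<omega>\<in>(UNIV::('n \<Rightarrow> 'm::finite \<times> bool) set). (\<Sum>i\<in>UNIV. \<Sum>j\<in>UNIV. a$i * b$j * Dm \<omega> i j)^2)
    \<le> 2 * (real (card (UNIV::('n \<Rightarrow> 'm \<times> bool) set)) / real CARD('m)) * norm a^2 * norm b^2"
proof -
  define Nm where "Nm = real (card (UNIV::('n \<Rightarrow> 'm \<times> bool) set)) / real CARD('m)"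
  have Nm: "Nm \<ge> 0" unfolding Nm_def by simp
  have sq: "(\<Sum>i\<in>UNIV. \<Sum>j\<in>UNIV. a$i * b$j * Dm \<omega> i j)^2 =
     (\<Sum>i\<in>UNIV. \<Sum>j\<in>UNIV. \<Sum>k\<in>UNIV. \<Sum>l\<in>UNIV. (a$i * b$j * a$k * b$l) * (Dm \<omega> i j * Dm \<omega> k l))"
    for \<omega> :: "'n \<Rightarrow> 'm \<times> bool"
  proof -
    have "(\<Sum>i\<in>UNIV. \<Sum>j\<in>UNIV. a$i * b$j * Dm \<omega> i j)^2 =
      (\<Sum>i\<in>UNIV. \<Sum>k\<in>UNIV. \<Sum>j\<in>UNIV. \<Sum>l\<in>UNIV. (a$i * b$j * Dm \<omega> i j) * (a$k * b$l * Dm \<omega> k l))"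
      by (simp only: power2_eq_square sum_product)
    also have "\<dots> = (\<Sum>i\<in>UNIV. \<Sum>j\<in>UNIV. \<Sum>k\<in>UNIV. \<Sum>l\<in>UNIV. (a$i * b$j * Dm \<omega> i j) * (a$k * b$l * Dm \<omega> k l))"
      by (rule sum.cong[OF refl], rule sum.swap)
    also have "\<dots> = (\<Sum>i\<in>UNIV. \<Sum>j\<in>UNIV. \<Sum>k\<in>UNIV. \<Sum>l\<in>UNIV. (a$i * b$j * a$k * b$l) * (Dm \<omega> i j * Dm \<omega> k l))"
      by (intro sum.cong refl) (simp only: mult_ac)
    finally show ?thesis .
  qed
  have "(\<Sum>\<omega>\<in>(UNIV::('n \<Rightarrow> 'm \<times> bool) set). (\<Sum>i\<in>UNIV. \<Sum>j\<in>UNIV. a$i * b$j * Dm \<omega> i j)^2)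
     = (\<Sum>i\<in>UNIV. \<Sum>j\<in>UNIV. \<Sum>k\<in>UNIV. \<Sum>l\<in>UNIV. \<Sum>\<omega>\<in>(UNIV::('n \<Rightarrow> 'm \<times> bool) set).
          (a$i * b$j * a$k * b$l) * (Dm \<omega> i j * Dm \<omega> k l))"
    unfolding sq by (rule swap4)
  also have "\<dots> = (\<Sum>i\<in>UNIV. \<Sum>j\<in>UNIV. \<Sum>k\<in>UNIV. \<Sum>l\<in>UNIV.
          (a$i * b$j * a$k * b$l) * (Nm * (if i \<noteq> j \<and> ((k = i \<and> l = j) \<or> (k = j \<and> l = i)) then 1 else 0)))"
    by (simp only: sum_distrib_left[symmetric] DD_sum Nm_def)
  also have "\<dots> = Nm * (\<Sum>i\<in>UNIV. \<Sum>j\<in>UNIV. if i \<noteq> j then (a$i * b$j)^2 + (a$i * b$j) * (a$j * b$i) else 0)"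
  proof -
    have "(\<Sum>k\<in>UNIV. \<Sum>l\<in>UNIV.
          (a$i * b$j * a$k * b$l) * (Nm * (if i \<noteq> j \<and> ((k = i \<and> l = j) \<or> (k = j \<and> l = i)) then 1 else 0)))
        = Nm * (if i \<noteq> j then (a$i * b$j)^2 + (a$i * b$j) * (a$j * b$i) else 0)" for i j
    proof (cases "i = j")
      case True then show ?thesis by simp
    next
      case False
      have "(\<Sum>k\<in>UNIV. \<Sum>l\<in>UNIV.
          (a$i * b$j * a$k * b$l) * (Nm * (if i \<noteq> j \<and> ((k = i \<and> l = j) \<or> (k = j \<and> l = i)) then 1 else 0)))
        = (\<Sum>k\<in>UNIV. \<Sum>l\<in>UNIV. (Nm * (a$i * b$j * a$k * b$l)) * (if (k = i \<and> l = j) \<or> (k = j \<and> l = i) then 1 else 0))"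
        using False by (intro sum.cong refl) simp
      also have "\<dots> = Nm * (a$i * b$j * a$i * b$j) + Nm * (a$i * b$j * a$j * b$i)"
        by (rule delta2[OF False, of "\<lambda>k l. Nm * (a$i * b$j * a$k * b$l)"])
      finally show ?thesis using False by (simp add: power2_eq_square algebra_simps)
    qed
    then show ?thesis by (simp add: sum_distrib_left)
  qed
  also have "\<dots> \<le> Nm * (\<Sum>i\<in>UNIV. \<Sum>j\<in>UNIV. (a$i * b$j)^2 + ((a$i * b$j)^2 + (a$j * b$i)^2) / 2)"
  proof (rule mult_left_mono[OF _ Nm], intro sum_mono)
    fix i j
    have "(a$i * b$j) * (a$j * b$i) \<le> ((a$i * b$j)^2 + (a$j * b$i)^2) / 2"
      using sum_squares_bound[of "a$i * b$j" "a$j * b$i"] by (simp add: power2_eq_square)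
    then show "(if i \<noteq> j then (a$i * b$j)^2 + (a$i * b$j) * (a$j * b$i) else 0)
        \<le> (a$i * b$j)^2 + ((a$i * b$j)^2 + (a$j * b$i)^2) / 2" by auto
  qed
  also have "(\<Sum>i\<in>UNIV. \<Sum>j\<in>UNIV. (a$i * b$j)^2 + ((a$i * b$j)^2 + (a$j * b$i)^2) / 2)
      = 2 * (\<Sum>i\<in>UNIV. \<Sum>j\<in>UNIV. (a$i * b$j)^2)"
  proof -
    have "(\<Sum>i\<in>UNIV. \<Sum>j\<in>UNIV. (a$j * b$i)^2) = (\<Sum>i\<in>UNIV. \<Sum>j\<in>UNIV. (a$i * b$j)^2)"
      by (rule sum.swap)
    moreover have "(\<Sum>i\<in>UNIV. \<Sum>j\<in>UNIV. (a$i * b$j)^2 + ((a$i * b$j)^2 + (a$j * b$i)^2) / 2)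
      = (\<Sum>i\<in>UNIV. \<Sum>j\<in>UNIV. (a$i * b$j)^2) + ((\<Sum>i\<in>UNIV. \<Sum>j\<in>UNIV. (a$i * b$j)^2)
         + (\<Sum>i\<in>UNIV. \<Sum>j\<in>UNIV. (a$j * b$i)^2)) / 2"
      by (simp only: sum.distrib flip: sum_divide_distrib)
    ultimately show ?thesis by simp
  qed
  also have "(\<Sum>i\<in>UNIV. \<Sum>j\<in>UNIV. (a$i * b$j)^2) = norm a^2 * norm b^2"
    by (simp add: norm_sq_vec sum_product power_mult_distrib)
  finally show ?thesis unfolding Nm_def by (simp add: mult_ac)
qed


lemma transpose_diff: "transpose (A - B) = transpose A - transpose (B::real^'c^'r)"
  by (simp add: transpose_def vec_eq_iff)

lemma norm_transpose: "norm (transpose (M::real^'c^'r)) = norm M"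
proof -
  have "norm (transpose M)^2 = norm M^2"
    unfolding norm_sq_mat norm_sq_vec by (simp add: transpose_def) (rule sum.swap)
  then show ?thesis by (simp add: power2_eq_iff_nonneg)
qed

lemma det_bound:
  fixes G :: "real^'q^'q" and A A0 :: "real^'p^'q" and b b0 d3 :: "real^'q" and d5 :: "real^'p"
  assumes EG: "norm (G - mat 1) \<le> g" and g1: "g < 1" and EA: "norm (A - A0) \<le> a" and as: "a < s" and a0: "0 \<le> a"
    and A0low: "\<And>x. s * norm x \<le> norm (A0 *v x)" and A0up: "\<And>w. norm (transpose A0 *v w) \<le> norm w"
    and bdef: "b = d3 + G *v b0" and d5: "transpose A *v b0 = d5"
  shows "invertible G" "invertible (transpose A ** matrix_inv G ** A)"
    "\<And>x. (transpose A ** matrix_inv G ** A) *v x = (transpose A ** matrix_inv G) *v b \<Longrightarrow>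
       norm x \<le> (1+g)^2/((1-g)*(s-a)^2) * ((1+a)/(1-g)) * (norm d3 + norm d5)"
proof -
  define E where "E = G - mat 1"
  have g0: "0 \<le> g" using EG norm_ge_zero order_trans by blast
  have Gv: "G *v v = v + E *v v" for v by (simp add: E_def algebra_simps)
  have Ev: "norm (E *v v) \<le> g * norm v" for v
    using norm_mv_le[of E v] mult_right_mono[OF EG norm_ge_zero[of v]] unfolding E_def by linarith
  have Glow: "(1-g) * norm v \<le> norm (G *v v)" for v
    using Gv[of v] Ev[of v] norm_diff_ineq[of v "E *v v"] by (simp add: algebra_simps)
  have Gup: "norm (G *v v) \<le> (1+g) * norm v" for v
    using Gv[of v] Ev[of v] norm_triangle_ineq[of v "E *v v"] by (simp add: algebra_simps)
  show invG: "invertible G"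
  proof (rule inj_invertible)
    fix x assume "G *v x = 0"
    then have "(1-g) * norm x \<le> 0" using Glow[of x] by simp
    then show "x = 0" using g1 by (simp add: mult_le_0_iff)
  qed
  define Gi where "Gi = matrix_inv G"
  have GGi: "G *v (Gi *v u) = u" for u
    using minv(1)[OF invG] by (simp add: Gi_def matrix_vector_mul_assoc)
  have GiG: "Gi *v (G *v u) = u" for u
    using minv(2)[OF invG] by (simp add: Gi_def matrix_vector_mul_assoc)
  have Giup: "norm (Gi *v u) \<le> norm u / (1-g)" for u
    using Glow[of "Gi *v u"] g1 by (simp add: GGi field_simps)
  have Giq: "(1-g)/(1+g)^2 * norm u^2 \<le> inner u (Gi *v u)" for u
  proof -
    define v where "v = Gi *v u"
    have u: "u = G *v v" unfolding v_def by (simp add: GGi)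
    have "inner u v = inner v v + inner (E *v v) v" unfolding u Gv by (simp add: inner_add_left)
    moreover have "inner (E *v v) v \<ge> - (g * norm v^2)"
    proof -
      have "\<bar>inner (E *v v) v\<bar> \<le> norm (E *v v) * norm v" by (rule Cauchy_Schwarz_ineq2)
      also have "\<dots> \<le> g * norm v * norm v" using Ev[of v] by (simp add: mult_right_mono)
      finally show ?thesis by (simp add: power2_eq_square)
    qed
    moreover have "inner v v = norm v^2" by (simp add: power2_norm_eq_inner)
    moreover have "(1-g) * norm v^2 = norm v^2 - g * norm v^2" by (simp add: algebra_simps)
    ultimately have 1: "inner u v \<ge> (1-g) * norm v^2" by linarith
    have "norm u \<le> (1+g) * norm v" unfolding u by (rule Gup)
    then have "norm u^2 \<le> ((1+g) * norm v)^2" by (rule power_mono) simp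
    then have "norm u^2 \<le> (1+g)^2 * norm v^2" by (simp add: power_mult_distrib)
    then have "(1-g)/(1+g)^2 * norm u^2 \<le> (1-g)/(1+g)^2 * ((1+g)^2 * norm v^2)"
      by (rule mult_left_mono) (use g1 in simp)
    also have "\<dots> = (1-g) * norm v^2" using g0 by (simp add: field_simps)
    finally have "(1-g)/(1+g)^2 * norm u^2 \<le> (1-g) * norm v^2" .
    then show ?thesis using 1 unfolding v_def by linarith
  qed
  have Alow: "(s - a) * norm x \<le> norm (A *v x)" for x
  proof -
    have "norm ((A - A0) *v x) \<le> a * norm x"
      using norm_mv_le[of "A - A0" x] mult_right_mono[OF EA norm_ge_zero[of x]] by linarith
    moreover have "norm (A0 *v x) - norm ((A - A0) *v x) \<le> norm (A *v x)"
      using norm_diff_ineq[of "A0 *v x" "(A - A0) *v x"] by (simp add: algebra_simps)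
    moreover have "(s - a) * norm x = s * norm x - a * norm x" by (simp add: algebra_simps)
    ultimately show ?thesis using A0low[of x] by linarith
  qed
  have ATup: "norm (transpose A *v w) \<le> (1 + a) * norm w" for w
  proof -
    have "norm (transpose (A - A0) *v w) \<le> a * norm w"
      using norm_mv_le[of "transpose (A - A0)" w] mult_right_mono[OF EA norm_ge_zero[of w]] norm_transpose[of "A - A0"]
      by simp
    moreover have "transpose A *v w = transpose A0 *v w + transpose (A - A0) *v w"
      by (simp add: transpose_diff algebra_simps)
    ultimately show ?thesis using A0up[of w] norm_triangle_ineq[of "transpose A0 *v w" "transpose (A - A0) *v w"]
      by (simp add: algebra_simps)
  qed
  define H where "H = transpose A ** Gi ** A"
  define k where "k = (1-g)/(1+g)^2 * (s-a)^2"
  have kpos: "k > 0" unfolding k_def using g0 g1 as by (simp add: field_simps)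
  have Hq: "k * norm x^2 \<le> inner x (H *v x)" for x
  proof -
    have "inner x (H *v x) = inner (A *v x) (Gi *v (A *v x))"
      unfolding H_def by (simp add: inner_mv matrix_vector_mul_assoc[symmetric])
    moreover have "(1-g)/(1+g)^2 * norm (A *v x)^2 \<le> inner (A *v x) (Gi *v (A *v x))" by (rule Giq)
    moreover have "((s-a) * norm x)^2 \<le> norm (A *v x)^2"
      by (rule power_mono[OF Alow]) (use as in simp)
    then have "(s-a)^2 * norm x^2 \<le> norm (A *v x)^2" by (simp add: power_mult_distrib)
    then have "(1-g)/(1+g)^2 * ((s-a)^2 * norm x^2) \<le> (1-g)/(1+g)^2 * norm (A *v x)^2"
      by (rule mult_left_mono) (use g1 in simp)
    ultimately show ?thesis unfolding k_def by (simp add: mult.assoc)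
  qed
  show "invertible (transpose A ** matrix_inv G ** A)"
    unfolding Gi_def[symmetric] H_def[symmetric]
  proof (rule inj_invertible)
    fix x assume "H *v x = 0"
    then have "k * norm x^2 \<le> 0" using Hq[of x] by simp
    then show "x = 0" using kpos by (simp add: mult_le_0_iff)
  qed
  fix x assume hx: "(transpose A ** matrix_inv G ** A) *v x = (transpose A ** matrix_inv G) *v b"
  define c where "c = (transpose A ** Gi) *v b"
  have Hx: "H *v x = c" using hx unfolding H_def c_def Gi_def .
  have c: "c = transpose A *v (Gi *v d3) + d5"
    unfolding c_def bdef by (simp add: matrix_vector_mul_assoc[symmetric] matrix_vector_right_distrib GiG d5[unfolded transpose_matrix_vector])
  have q1: "(1+a)/(1-g) \<ge> 1" using a0 g0 g1 by (simp add: field_simps)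
  have "norm c \<le> (1+a) * (norm d3 / (1-g)) + norm d5"
  proof -
    have "(1+a) * norm (Gi *v d3) \<le> (1+a) * (norm d3 / (1-g))"
      by (rule mult_left_mono[OF Giup]) (use a0 in simp)
    then show ?thesis
      unfolding c using ATup[of "Gi *v d3"] norm_triangle_ineq[of "transpose A *v (Gi *v d3)" d5] by linarith
  qed
  also have "\<dots> \<le> (1+a)/(1-g) * (norm d3 + norm d5)"
  proof -
    have "norm d5 \<le> (1+a)/(1-g) * norm d5" using q1 mult_right_mono[OF q1 norm_ge_zero[of d5]] by simp
    have "(1+a) * (norm d3 / (1-g)) + norm d5 = (1+a)/(1-g) * norm d3 + norm d5" by simp
    also have "\<dots> \<le> (1+a)/(1-g) * norm d3 + (1+a)/(1-g) * norm d5"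
      by (rule add_left_mono) fact
    also have "\<dots> = (1+a)/(1-g) * (norm d3 + norm d5)"
      by (rule distrib_left[symmetric])
    finally show ?thesis .
  qed
  finally have cb: "norm c \<le> (1+a)/(1-g) * (norm d3 + norm d5)" .
  have "k * norm x^2 \<le> norm x * norm c"
    using Hq[of x] Cauchy_Schwarz_ineq2[of x c] abs_ge_self[of "inner x c"] unfolding Hx by linarith
  then have "k * norm x \<le> norm c"
    by (cases "x = 0") (auto simp: power2_eq_square)
  then have "norm x \<le> norm c / k" using kpos by (simp add: field_simps)
  also have "\<dots> \<le> (1+a)/(1-g) * (norm d3 + norm d5) / k" by (rule divide_right_mono[OF cb]) (use kpos in simp)
  also have "\<dots> = (1+g)^2/((1-g)*(s-a)^2) * ((1+a)/(1-g)) * (norm d3 + norm d5)"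
    unfolding k_def using g0 g1 as by (simp add: field_simps)
  finally show "norm x \<le> (1+g)^2/((1-g)*(s-a)^2) * ((1+a)/(1-g)) * (norm d3 + norm d5)" .
qed


definition Dmat :: "('n::finite \<Rightarrow> 'm \<times> bool) \<Rightarrow> real^'n^'n" where
  "Dmat \<omega> = (\<chi> i j. Dm \<omega> i j)"

definition qf :: "('n::finite \<Rightarrow> 'm \<times> bool) \<Rightarrow> real^'n \<Rightarrow> real^'n \<Rightarrow> real" where
  "qf \<omega> a b = (\<Sum>i\<in>UNIV. \<Sum>j\<in>UNIV. a$i * b$j * Dm \<omega> i j)"

lemma mm_add_rdistrib: "((A::real^'n^'m) + B) ** (C::real^'p^'n) = A ** C + B ** C"
  by (vector matrix_matrix_mult_def sum.distrib[symmetric] field_simps)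

lemma cs_entry: "countsketch_matrix \<omega> $ k $ j = (if fst (\<omega> j) = k then sg \<omega> j else 0)"
  by (simp add: countsketch_matrix_def sg_def)

lemma StS: "transpose (countsketch_matrix \<omega>) ** countsketch_matrix \<omega> = Dmat \<omega> + mat 1"
proof -
  have "(\<Sum>k\<in>UNIV. (if fst (\<omega> i) = k then sg \<omega> i else 0) * (if fst (\<omega> j) = k then sg \<omega> j else 0))
        = Dm \<omega> i j + (if i = j then 1 else 0)" for i j
  proof -
    have "(\<Sum>k\<in>UNIV. (if fst (\<omega> i) = k then sg \<omega> i else 0) * (if fst (\<omega> j) = k then sg \<omega> j else 0))
        = (\<Sum>k\<in>UNIV. if fst (\<omega> i) = k then sg \<omega> i * (if fst (\<omega> j) = k then sg \<omega> j else 0) else 0)"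
      by (intro sum.cong refl) simp
    also have "\<dots> = sg \<omega> i * (if fst (\<omega> j) = fst (\<omega> i) then sg \<omega> j else 0)" by simp
    also have "\<dots> = Dm \<omega> i j + (if i = j then 1 else 0)"
      by (cases "i = j") (auto simp: Dm_def)
    finally show ?thesis .
  qed
  then show ?thesis
    by (simp add: vec_eq_iff matrix_matrix_mult_def transpose_def cs_entry Dmat_def mat_def)
qed

lemma sketch_mm:
  fixes M :: "real^'c^'n::finite" and N :: "real^'d^'n" and \<omega> :: "'n \<Rightarrow> 'm::finite \<times> bool"
  shows "transpose (countsketch_matrix \<omega> ** M) ** (countsketch_matrix \<omega> ** N)
     = transpose M ** Dmat \<omega> ** N + transpose M ** N"
proof -
  let ?P = "countsketch_matrix \<omega> :: real^'n^'m"
  have "transpose (?P ** M) ** (?P ** N) = transpose M ** (transpose ?P ** ?P) ** N"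
    by (simp add: matrix_transpose_mul matrix_mul_assoc)
  also have "\<dots> = transpose M ** Dmat \<omega> ** N + transpose M ** N"
    by (simp add: StS matrix_add_ldistrib mm_add_rdistrib)
  finally show ?thesis .
qed

lemma sketch_mv:
  fixes M :: "real^'c^'n::finite" and v :: "real^'n" and \<omega> :: "'n \<Rightarrow> 'm::finite \<times> bool"
  shows "transpose (countsketch_matrix \<omega> ** M) *v (countsketch_matrix \<omega> *v v)
     = transpose M *v (Dmat \<omega> *v v) + transpose M *v v"
proof -
  let ?P = "countsketch_matrix \<omega> :: real^'n^'m"
  have "transpose (?P ** M) *v (?P *v v) = (transpose M ** (transpose ?P ** ?P)) *v v"
    by (simp add: matrix_transpose_mul matrix_mul_assoc matrix_vector_mul_assoc)
  also have "\<dots> = transpose M *v (Dmat \<omega> *v v) + transpose M *v v"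
    by (simp add: StS matrix_add_ldistrib matrix_vector_mult_add_rdistrib matrix_vector_mul_assoc)
  finally show ?thesis .
qed

lemma entry_mm: "(transpose M ** Dmat \<omega> ** N) $ r $ c = qf \<omega> (column r M) (column c (N::real^'d^'n::finite))"
  by (simp add: qf_def matrix_matrix_mult_def transpose_def column_def Dmat_def sum_distrib_left
      sum_distrib_right mult_ac) (rule sum.swap)

lemma entry_mv: "(transpose M *v (Dmat \<omega> *v v)) $ r = qf \<omega> (column r (M::real^'c^'n::finite)) v"
  by (simp add: qf_def matrix_vector_mult_def transpose_def column_def Dmat_def sum_distrib_left mult_ac)

lemma col_norm_sum: "(\<Sum>r\<in>UNIV. norm (column r (M::real^'c^'r))^2) = norm M^2"
  by (simp add: norm_sq_mat norm_sq_vec column_def) (rule sum.swap)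

lemma orth_frob: assumes "transpose W ** (W::real^'c^'r) = mat 1" shows "norm W^2 = real CARD('c)"
proof -
  have "norm (column r W)^2 = 1" for r
  proof -
    have "inner (column r W) (column r W) = (transpose W ** W) $ r $ r"
      by (simp add: matrix_mult_transpose_dot_column)
    then show ?thesis using assms by (simp add: power2_norm_eq_inner mat_def)
  qed
  then show ?thesis using col_norm_sum[of W] by simp
qed

lemma exp_mm:
  fixes M :: "real^'c^'n::finite" and N :: "real^'d^'n"
  shows "(\<Sum>\<omega>\<in>(UNIV::('n \<Rightarrow> 'm::finite \<times> bool) set). norm (transpose M ** Dmat \<omega> ** N)^2)
    \<le> 2 * (real (card (UNIV::('n \<Rightarrow> 'm \<times> bool) set)) / real CARD('m)) * norm M^2 * norm N^2"
proof -
  define Nm where "Nm = real (card (UNIV::('n \<Rightarrow> 'm \<times> bool) set)) / real CARD('m)"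
  have "(\<Sum>\<omega>\<in>(UNIV::('n \<Rightarrow> 'm \<times> bool) set). norm (transpose M ** Dmat \<omega> ** N)^2)
     = (\<Sum>\<omega>\<in>(UNIV::('n \<Rightarrow> 'm \<times> bool) set). \<Sum>r\<in>UNIV. \<Sum>c\<in>UNIV. (qf \<omega> (column r M) (column c N))^2)"
    by (simp add: norm_sq_mat norm_sq_vec entry_mm)
  also have "\<dots> = (\<Sum>r\<in>UNIV. \<Sum>c\<in>UNIV. \<Sum>\<omega>\<in>(UNIV::('n \<Rightarrow> 'm \<times> bool) set). (qf \<omega> (column r M) (column c N))^2)"
  proof -
    have "(\<Sum>\<omega>\<in>(UNIV::('n \<Rightarrow> 'm \<times> bool) set). \<Sum>r\<in>UNIV. \<Sum>c\<in>UNIV. (qf \<omega> (column r M) (column c N))^2)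
      = (\<Sum>r\<in>UNIV. \<Sum>\<omega>\<in>(UNIV::('n \<Rightarrow> 'm \<times> bool) set). \<Sum>c\<in>UNIV. (qf \<omega> (column r M) (column c N))^2)"
      by (rule sum.swap)
    also have "\<dots> = (\<Sum>r\<in>UNIV. \<Sum>c\<in>UNIV. \<Sum>\<omega>\<in>(UNIV::('n \<Rightarrow> 'm \<times> bool) set). (qf \<omega> (column r M) (column c N))^2)"
      by (rule sum.cong[OF refl], rule sum.swap)
    finally show ?thesis .
  qed
  also have "\<dots> \<le> (\<Sum>r\<in>UNIV. \<Sum>c\<in>UNIV. 2 * Nm * norm (column r M)^2 * norm (column c N)^2)"
    by (intro sum_mono) (unfold qf_def Nm_def, rule quad_moment)
  also have "\<dots> = 2 * Nm * (\<Sum>r\<in>UNIV. norm (column r M)^2) * (\<Sum>c\<in>UNIV. norm (column c N)^2)"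
    by (simp add: sum_distrib_left sum_distrib_right mult_ac)
  also have "\<dots> = 2 * Nm * norm M^2 * norm N^2" by (simp add: col_norm_sum)
  finally show ?thesis unfolding Nm_def .
qed

lemma exp_mv:
  fixes M :: "real^'c^'n::finite" and v :: "real^'n"
  shows "(\<Sum>\<omega>\<in>(UNIV::('n \<Rightarrow> 'm::finite \<times> bool) set). norm (transpose M *v (Dmat \<omega> *v v))^2)
    \<le> 2 * (real (card (UNIV::('n \<Rightarrow> 'm \<times> bool) set)) / real CARD('m)) * norm M^2 * norm v^2"
proof -
  define Nm where "Nm = real (card (UNIV::('n \<Rightarrow> 'm \<times> bool) set)) / real CARD('m)"
  have "(\<Sum>\<omega>\<in>(UNIV::('n \<Rightarrow> 'm \<times> bool) set). norm (transpose M *v (Dmat \<omega> *v v))^2)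
     = (\<Sum>\<omega>\<in>(UNIV::('n \<Rightarrow> 'm \<times> bool) set). \<Sum>r\<in>UNIV. (qf \<omega> (column r M) v)^2)"
    by (simp only: norm_sq_vec entry_mv)
  also have "\<dots> = (\<Sum>r\<in>UNIV. \<Sum>\<omega>\<in>(UNIV::('n \<Rightarrow> 'm \<times> bool) set). (qf \<omega> (column r M) v)^2)"
    by (rule sum.swap)
  also have "\<dots> \<le> (\<Sum>r\<in>UNIV. 2 * Nm * norm (column r M)^2 * norm v^2)"
    by (intro sum_mono) (unfold qf_def Nm_def, rule quad_moment)
  also have "\<dots> = 2 * Nm * (\<Sum>r\<in>UNIV. norm (column r M)^2) * norm v^2"
    by (simp add: sum_distrib_left sum_distrib_right mult_ac)
  also have "\<dots> = 2 * Nm * norm M^2 * norm v^2" by (simp add: col_norm_sum)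
  finally show ?thesis unfolding Nm_def .
qed


lemma inv_inj: assumes "invertible (A::real^'n^'n)" "A *v x = 0" shows "x = 0"
proof -
  have "x = (matrix_inv A ** A) *v x" using minv(2)[OF assms(1)] by simp
  also have "\<dots> = matrix_inv A *v (A *v x)" by (simp add: matrix_vector_mul_assoc)
  finally show ?thesis using assms(2) by simp
qed

lemma mul_cancel: assumes "A ** B = mat 1" shows "A ** (B ** C) = (C::real^'k^'n)"
proof -
  have "A ** (B ** C) = (A ** B) ** C" by (rule matrix_mul_assoc)
  then show ?thesis using assms by simp
qed

lemma mat1_inv: "invertible (mat 1 :: real^'n^'n)" "matrix_inv (mat 1 :: real^'n^'n) = mat 1"
proof -
  show i: "invertible (mat 1 :: real^'n^'n)" unfolding invertible_def by (rule exI[of _ "mat 1"]) simp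
  show "matrix_inv (mat 1 :: real^'n^'n) = mat 1" by (rule minv_unique[OF i]) simp
qed

lemma proj_mul:
  fixes M :: "real^'q^'n" and R :: "real^'q^'q"
  assumes iG: "invertible (transpose M ** M)" and iR: "invertible R"
  shows "proj (M ** R) = M ** matrix_inv (transpose M ** M) ** transpose M"
proof -
  define G where "G = transpose M ** M"
  define K where "K = matrix_inv G"
  define Ri where "Ri = matrix_inv R"
  have GK: "G ** K = mat 1" unfolding K_def using minv(1) iG G_def by blast
  have RRi: "R ** Ri = mat 1" and RiR: "Ri ** R = mat 1" unfolding Ri_def using minv iR by blast+
  have "transpose Ri ** transpose R = transpose (R ** Ri)" by (simp only: matrix_transpose_mul)
  then have tRiR: "transpose Ri ** transpose R = mat 1" using RRi by simp
  have "transpose R ** transpose Ri = transpose (Ri ** R)" by (simp only: matrix_transpose_mul)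
  then have tRRi: "transpose R ** transpose Ri = mat 1" using RiR by simp
  have eq: "transpose (M ** R) ** (M ** R) = transpose R ** G ** R"
    by (simp add: G_def matrix_transpose_mul matrix_mul_assoc)
  have iG': "invertible G" using iG unfolding G_def .
  have inv: "invertible (transpose R ** G ** R)"
    by (rule invertible_mult[OF invertible_mult[OF transpose_invertible[OF iR] iG'] iR])
  have "(transpose R ** G ** R) ** (Ri ** K ** transpose Ri) = mat 1"
  proof -
    have "(transpose R ** G ** R) ** (Ri ** K ** transpose Ri) = transpose R ** (G ** ((R ** Ri) ** K) ** transpose Ri)"
      by (simp add: matrix_mul_assoc)
    also have "\<dots> = transpose R ** transpose Ri" using GK RRi by simp
    finally show ?thesis using tRRi by simp
  qed
  then have mi: "matrix_inv (transpose R ** G ** R) = Ri ** K ** transpose Ri"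
    by (rule minv_unique[OF inv])
  have "proj (M ** R) = M ** R ** (Ri ** K ** transpose Ri) ** (transpose R ** transpose M)"
    unfolding proj_def eq mi by (simp add: matrix_transpose_mul)
  also have "\<dots> = M ** ((R ** Ri) ** K ** (transpose Ri ** transpose R)) ** transpose M"
    by (simp add: matrix_mul_assoc)
  also have "\<dots> = M ** K ** transpose M" using RRi tRiR by (simp add: matrix_mul_assoc)
  finally show ?thesis unfolding K_def G_def .
qed

lemma card_le_inj:
  fixes B :: "real^'p^'q"
  assumes "\<And>x. B *v x = 0 \<Longrightarrow> x = 0"
  shows "CARD('p) \<le> CARD('q)"
proof -
  have "inj_on (\<lambda>x. B *v x) UNIV"
  proof (rule inj_onI)
    fix x y assume "B *v x = B *v y"
    then have "B *v (x - y) = 0" by (simp add: matrix_vector_mult_diff_distrib)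
    then show "x = y" using assms[of "x - y"] by simp
  qed
  moreover have "continuous_on UNIV (\<lambda>x. B *v x)"
    by (intro linear_continuous_on matrix_vector_mul_bounded_linear)
  ultimately have "DIM(real^'p) \<le> DIM(real^'q)"
    using invariance_of_dimension[of UNIV "\<lambda>x. B *v x"] by auto
  then show ?thesis by simp
qed

lemma kappa_bound:
  fixes \<epsilon> s :: real
  assumes e0: "0 < \<epsilon>" and es: "16 * \<epsilon> \<le> s^2" and s1: "s^2 \<le> 1" and s0: "0 < s"
  shows "(1+2*\<epsilon>)^2/((1-2*\<epsilon>)*(s-2*\<epsilon>)^2) * ((1+2*\<epsilon>)/(1-2*\<epsilon>)) \<le> 4/s^2"
proof -
  have e16: "\<epsilon> \<le> 1/16" using es s1 by linarith
  have s_le1: "s \<le> 1" using power2_le_imp_le[of s 1] s1 by simp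
  have "2*\<epsilon> \<le> s^2/8" using es by simp
  also have "s^2/8 \<le> s/8" using s_le1 s0 by (simp add: power2_eq_square mult_le_cancel_left1)
  finally have e2s: "2*\<epsilon> \<le> s/8" .
  have A: "(1+2*\<epsilon>)^3 \<le> (9/8)^3" by (rule power_mono) (use e16 e0 in auto)
  have B1: "(7/8)^2 \<le> (1-2*\<epsilon>)^2" by (rule power_mono) (use e16 in auto)
  have B2: "((7/8) * s)^2 \<le> (s-2*\<epsilon>)^2" by (rule power_mono) (use e2s s0 in auto)
  have den: "(7/8)^2 * ((7/8) * s)^2 \<le> (1-2*\<epsilon>)^2 * (s-2*\<epsilon>)^2"
    by (rule mult_mono[OF B1 B2]) auto
  have dpos: "0 < (7/8)^2 * ((7/8) * s)^2" using s0 by simp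
  have "(1+2*\<epsilon>)^2/((1-2*\<epsilon>)*(s-2*\<epsilon>)^2) * ((1+2*\<epsilon>)/(1-2*\<epsilon>))
        = (1+2*\<epsilon>)^3 / ((1-2*\<epsilon>)^2 * (s-2*\<epsilon>)^2)"
    using e16 by (simp add: power2_eq_square power3_eq_cube field_simps)
  also have "\<dots> \<le> (9/8)^3 / ((7/8)^2 * ((7/8) * s)^2)"
    by (rule frac_le[OF _ A dpos den]) simp
  also have "\<dots> \<le> 4/s^2" using s0 by (simp add: field_simps power2_eq_square)
  finally show ?thesis .
qed


lemma det_event:
  fixes y :: "real^'n::finite" and X :: "real^'p::finite^'n" and Z :: "real^'q::finite^'n"
    and U :: "real^'p^'n" and T :: "real^'p^'p" and W :: "real^'q^'n" and R :: "real^'q^'q"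
    and \<omega> :: "'n \<Rightarrow> 'm::finite \<times> bool" and \<epsilon> s \<sigma>X :: real and e :: "real^'n"
  assumes XT: "X = U ** T" and ZR: "Z = W ** R" and UU: "transpose U ** U = mat 1"
    and WW: "transpose W ** W = mat 1" and iT: "invertible T" and iR: "invertible R"
    and ne: "transpose U *v (W *v (transpose W *v e)) = 0"
    and edef: "e = y - X *v tsls y X Z"
    and s0: "0 < s" and slow: "\<And>x. s * norm x \<le> norm ((transpose W ** U) *v x)"
    and es: "16 * \<epsilon> \<le> s^2" and s1: "s^2 \<le> 1" and e0: "0 < \<epsilon>"
    and sX0: "0 < \<sigma>X" and sXlow: "\<And>x. \<sigma>X * norm x \<le> norm (X *v x)"
    and Q1: "norm (transpose W ** Dmat \<omega> ** W) \<le> 2 * \<epsilon>"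
    and Q2: "norm (transpose W ** Dmat \<omega> ** U) \<le> 2 * \<epsilon>"
    and Q35: "norm (transpose W *v (Dmat \<omega> *v (e - W *v (transpose W *v e))))
            + norm (transpose U *v (Dmat \<omega> *v (W *v (transpose W *v e)))) \<le> 3 * \<epsilon> * norm e / sqrt (real CARD('p))"
  shows "invertible (transpose (countsketch_matrix \<omega> ** Z) ** (countsketch_matrix \<omega> ** Z)) \<and>
     invertible (transpose (countsketch_matrix \<omega> ** X) ** proj (countsketch_matrix \<omega> ** Z) ** (countsketch_matrix \<omega> ** X)) \<and>
     norm (tsls (countsketch_matrix \<omega> *v y) (countsketch_matrix \<omega> ** X) (countsketch_matrix \<omega> ** Z) - tsls y X Z)
       \<le> 12 * \<epsilon> * norm e / sqrt (real CARD('p)) / (\<sigma>X * s^2)"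
proof -
  define P where "P = (countsketch_matrix \<omega> :: real^'n^'m)"
  define PW where "PW = P ** W"
  define PU where "PU = P ** U"
  define G where "G = transpose PW ** PW"
  define A where "A = transpose PW ** PU"
  define A0 where "A0 = transpose W ** U"
  define b0 where "b0 = transpose W *v e"
  define e2 where "e2 = W *v b0"
  define e1 where "e1 = e - e2"
  define d3 where "d3 = transpose PW *v (P *v e1)"
  define d5 where "d5 = transpose PU *v (P *v e2)"
  define b where "b = transpose PW *v (P *v e)"
  have e16: "\<epsilon> \<le> 1/16" using es s1 by linarith
  have s_le1: "s \<le> 1" using power2_le_imp_le[of s 1] s1 by simp
  have e2s: "2*\<epsilon> < s"
  proof -
    have "2*\<epsilon> \<le> s^2/8" using es by simp
    also have "s^2/8 \<le> s/8" using s_le1 s0 by (simp add: power2_eq_square mult_le_cancel_left1)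
    finally show ?thesis using s0 by simp
  qed
  have hG: "G - mat 1 = transpose W ** Dmat \<omega> ** W"
    unfolding G_def PW_def P_def using sketch_mm[of \<omega> W W] WW by simp
  have hA: "A - A0 = transpose W ** Dmat \<omega> ** U"
    unfolding A_def A0_def PW_def PU_def P_def using sketch_mm[of \<omega> W U] by simp
  have We1: "transpose W *v e1 = 0"
    unfolding e1_def e2_def b0_def
    by (simp add: matrix_vector_mult_diff_distrib matrix_vector_mul_assoc WW)
  have hd3: "d3 = transpose W *v (Dmat \<omega> *v e1)"
    unfolding d3_def PW_def P_def using sketch_mv[of \<omega> W e1] We1 by simp
  have hd5: "d5 = transpose U *v (Dmat \<omega> *v e2)"
    unfolding d5_def PU_def P_def using sketch_mv[of \<omega> U e2] ne unfolding e2_def b0_def by simp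
  have Pe2: "P *v e2 = PW *v b0" unfolding e2_def PW_def by (simp add: matrix_vector_mul_assoc)
  have hb: "b = d3 + G *v b0"
  proof -
    have "e = e1 + e2" unfolding e1_def by simp
    then have "b = d3 + transpose PW *v (P *v e2)"
      unfolding b_def d3_def by (simp add: matrix_vector_right_distrib)
    also have "transpose PW *v (P *v e2) = G *v b0"
      unfolding Pe2 G_def by (simp add: matrix_vector_mul_assoc)
    finally show ?thesis .
  qed
  have hd5': "transpose A *v b0 = d5"
  proof -
    have "transpose A = transpose PU ** PW" unfolding A_def by (simp add: matrix_transpose_mul)
    then show ?thesis unfolding d5_def Pe2 by (simp add: matrix_vector_mul_assoc)
  qed
  have A0up: "norm (transpose A0 *v w) \<le> norm w" for w
  proof -
    have "transpose A0 *v w = transpose U *v (W *v w)"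
      unfolding A0_def by (simp add: matrix_transpose_mul matrix_vector_mul_assoc)
    then show ?thesis using bessel[OF UU, of "W *v w"] orth_norm[OF WW, of w] by simp
  qed
  have nG: "norm (G - mat 1) \<le> 2*\<epsilon>" using hG Q1 by simp
  have nA: "norm (A - A0) \<le> 2*\<epsilon>" using hA Q2 by simp
  have g1: "2*\<epsilon> < 1" using e16 by simp
  have a0: "0 \<le> 2*\<epsilon>" using e0 by simp
  have slow': "s * norm x \<le> norm (A0 *v x)" for x unfolding A0_def by (rule slow)
  note DB = det_bound[OF nG g1 nA e2s a0 slow' A0up hb hd5']
  define Gi where "Gi = matrix_inv G"
  define H where "H = transpose A ** Gi ** A"
  have invG: "invertible G" by (rule DB(1))
  have invH: "invertible H" unfolding H_def Gi_def by (rule DB(2))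
  have Zt: "P ** Z = PW ** R" unfolding ZR PW_def by (simp add: matrix_mul_assoc)
  have ZtZt: "transpose (P ** Z) ** (P ** Z) = transpose R ** G ** R"
    unfolding Zt G_def by (simp add: matrix_transpose_mul matrix_mul_assoc)
  have invZt: "invertible (transpose (P ** Z) ** (P ** Z))"
    unfolding ZtZt by (rule invertible_mult[OF invertible_mult[OF transpose_invertible[OF iR] invG] iR])
  have projZt: "proj (P ** Z) = PW ** Gi ** transpose PW"
    unfolding Zt Gi_def G_def by (rule proj_mul[OF _ iR]) (use invG G_def in simp)
  have Xt: "P ** X = PU ** T" unfolding XT PU_def by (simp add: matrix_mul_assoc)
  have tA: "transpose A = transpose PU ** PW" unfolding A_def by (simp add: matrix_transpose_mul)
  have XP: "transpose (P ** X) ** proj (P ** Z) = transpose T ** (transpose A ** Gi) ** transpose PW"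
    unfolding Xt projZt tA by (simp add: matrix_transpose_mul matrix_mul_assoc)
  have KT: "transpose (P ** X) ** proj (P ** Z) ** (P ** X) = transpose T ** H ** T"
  proof -
    have "transpose (P ** X) ** proj (P ** Z) ** (P ** X) = (transpose T ** (transpose A ** Gi) ** transpose PW) ** (PU ** T)"
      by (rule arg_cong2[where f="(**)", OF XP Xt])
    also have "\<dots> = transpose T ** H ** T" unfolding H_def A_def by (simp add: matrix_mul_assoc)
    finally show ?thesis .
  qed
  have invKT: "invertible (transpose (P ** X) ** proj (P ** Z) ** (P ** X))"
    unfolding KT by (rule invertible_mult[OF invertible_mult[OF transpose_invertible[OF iT] invH] iT])
  define bt where "bt = tsls (P *v y) (P ** X) (P ** Z)"
  define bh where "bh = tsls y X Z"
  define d where "d = bt - bh"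
  define K where "K = transpose (P ** X) ** proj (P ** Z) ** (P ** X)"
  have Kbt: "K *v bt = (transpose (P ** X) ** proj (P ** Z)) *v (P *v y)"
  proof -
    have "K *v bt = (K ** matrix_inv K) *v ((transpose (P ** X) ** proj (P ** Z)) *v (P *v y))"
      unfolding bt_def tsls_def K_def by (simp add: matrix_vector_mul_assoc matrix_mul_assoc)
    then show ?thesis using minv(1)[OF invKT] unfolding K_def by simp
  qed
  have Kbh: "K *v bh = (transpose (P ** X) ** proj (P ** Z)) *v (P *v (X *v bh))"
    unfolding K_def by (simp add: matrix_vector_mul_assoc)
  have Kd: "K *v d = (transpose (P ** X) ** proj (P ** Z)) *v (P *v e)"
    unfolding d_def edef bh_def[symmetric] using Kbt Kbh
    by (simp add: matrix_vector_mult_diff_distrib)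
  have "transpose T *v (H *v (T *v d)) = transpose T *v ((transpose A ** Gi) *v b)"
  proof -
    have "transpose T *v (H *v (T *v d)) = K *v d"
      unfolding K_def KT by (simp add: matrix_vector_mul_assoc matrix_mul_assoc)
    also have "\<dots> = transpose T *v ((transpose A ** Gi) *v b)"
      unfolding Kd XP b_def by (simp add: matrix_vector_mul_assoc matrix_mul_assoc)
    finally show ?thesis .
  qed
  then have "transpose T *v (H *v (T *v d) - (transpose A ** Gi) *v b) = 0"
    by (simp add: matrix_vector_mult_diff_distrib)
  then have "H *v (T *v d) - (transpose A ** Gi) *v b = 0"
    by (rule inv_inj[OF transpose_invertible[OF iT]])
  then have HTd: "H *v (T *v d) = (transpose A ** Gi) *v b" by simp
  have Tdb: "norm (T *v d) \<le> (1+2*\<epsilon>)^2/((1-2*\<epsilon>)*(s-2*\<epsilon>)^2) * ((1+2*\<epsilon>)/(1-2*\<epsilon>)) * (norm d3 + norm d5)"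
    by (rule DB(3)) (use HTd in \<open>simp add: H_def Gi_def\<close>)
  have kb: "(1+2*\<epsilon>)^2/((1-2*\<epsilon>)*(s-2*\<epsilon>)^2) * ((1+2*\<epsilon>)/(1-2*\<epsilon>)) \<le> 4/s^2"
    by (rule kappa_bound[OF e0 es s1 s0])
  have d35: "norm d3 + norm d5 \<le> 3 * \<epsilon> * norm e / sqrt (real CARD('p))"
    using Q35 unfolding hd3 hd5 e1_def e2_def b0_def .
  have "norm (T *v d) \<le> 4/s^2 * (3 * \<epsilon> * norm e / sqrt (real CARD('p)))"
  proof -
    have "norm (T *v d) \<le> (1+2*\<epsilon>)^2/((1-2*\<epsilon>)*(s-2*\<epsilon>)^2) * ((1+2*\<epsilon>)/(1-2*\<epsilon>)) * (norm d3 + norm d5)"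
      by (rule Tdb)
    also have "\<dots> \<le> 4/s^2 * (norm d3 + norm d5)"
      by (rule mult_right_mono[OF kb]) simp
    also have "\<dots> \<le> 4/s^2 * (3 * \<epsilon> * norm e / sqrt (real CARD('p)))"
      by (rule mult_left_mono[OF d35]) simp
    finally show ?thesis .
  qed
  moreover have "norm (X *v d) = norm (T *v d)"
    unfolding XT by (simp add: matrix_vector_mul_assoc[symmetric] orth_norm[OF UU])
  ultimately have "\<sigma>X * norm d \<le> 4/s^2 * (3 * \<epsilon> * norm e / sqrt (real CARD('p)))"
    using sXlow[of d] by simp
  then have "\<sigma>X * norm d / \<sigma>X \<le> 4/s^2 * (3 * \<epsilon> * norm e / sqrt (real CARD('p))) / \<sigma>X"
    by (rule divide_right_mono) (use sX0 in simp)
  moreover have "\<sigma>X * norm d / \<sigma>X = norm d" using sX0 by simp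
  ultimately have "norm d \<le> 4/s^2 * (3 * \<epsilon> * norm e / sqrt (real CARD('p))) / \<sigma>X" by simp
  also have "\<dots> = 12 * \<epsilon> * norm e / sqrt (real CARD('p)) / (\<sigma>X * s^2)"
    using s0 sX0 by (simp add: field_simps)
  finally have "norm d \<le> 12 * \<epsilon> * norm e / sqrt (real CARD('p)) / (\<sigma>X * s^2)" .
  then show ?thesis using invZt invKT unfolding d_def bt_def bh_def P_def by simp
qed


lemma markov_card:
  fixes Tf :: "'a::finite \<Rightarrow> real"
  assumes nn: "\<And>\<omega>. Tf \<omega> \<ge> 0" and sb: "(\<Sum>\<omega>\<in>UNIV. Tf \<omega>) \<le> 4 * \<delta> * real CARD('a)"
  shows "real (card {\<omega>. Tf \<omega> < 4}) \<ge> (1 - \<delta>) * real CARD('a)"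
proof -
  let ?B = "{\<omega>. \<not> Tf \<omega> < 4}"
  have "4 * real (card ?B) = (\<Sum>\<omega>\<in>?B. 4)" by simp
  also have "\<dots> \<le> (\<Sum>\<omega>\<in>?B. Tf \<omega>)" by (rule sum_mono) simp
  also have "\<dots> \<le> (\<Sum>\<omega>\<in>UNIV. Tf \<omega>)" by (rule sum_mono2) (use nn in auto)
  finally have "4 * real (card ?B) \<le> 4 * \<delta> * real CARD('a)" using sb by linarith
  then have b: "real (card ?B) \<le> \<delta> * real CARD('a)" by simp
  have "card {\<omega>. Tf \<omega> < 4} + card ?B = CARD('a)"
    by (subst card_Un_disjoint[symmetric]) (auto intro: arg_cong[where f=card])
  then have "real (card {\<omega>. Tf \<omega> < 4}) = real CARD('a) - real (card ?B)" by linarith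
  then show ?thesis using b by (simp add: algebra_simps)
qed

lemma sum_lin:
  fixes a b d f :: "'a \<Rightarrow> real"
  shows "(\<Sum>\<omega>\<in>S. (a \<omega> + b \<omega>) / c + k * (d \<omega> + f \<omega>) / h)
    = (sum a S + sum b S) / c + k * (sum d S + sum f S) / h"
proof -
  have "(\<Sum>\<omega>\<in>S. (a \<omega> + b \<omega>) / c + k * (d \<omega> + f \<omega>) / h)
      = (\<Sum>\<omega>\<in>S. (a \<omega> + b \<omega>) / c) + (\<Sum>\<omega>\<in>S. k * (d \<omega> + f \<omega>) / h)"
    by (rule sum.distrib)
  also have "(\<Sum>\<omega>\<in>S. (a \<omega> + b \<omega>) / c) = (sum a S + sum b S) / c"
    by (simp only: sum_divide_distrib[symmetric] sum.distrib)
  also have "(\<Sum>\<omega>\<in>S. k * (d \<omega> + f \<omega>) / h) = k * (sum d S + sum f S) / h"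
    by (simp only: sum_divide_distrib[symmetric] sum_distrib_left[symmetric] sum.distrib)
  finally show ?thesis .
qed

lemma exp_total:
  fixes W :: "real^'q::finite^'n::finite" and U :: "real^'p::finite^'n" and e e1 e2 :: "real^'n"
    and \<epsilon> \<delta> :: real
  assumes WW: "transpose W ** W = mat 1" and UU: "transpose U ** U = mat 1"
    and pyth: "norm e1^2 + norm e2^2 = norm e^2" and pq: "CARD('p) \<le> CARD('q)"
    and e0: "0 < \<epsilon>" and d0: "0 < \<delta>"
    and mbig: "real CARD('m::finite) \<ge>
           max (real (CARD('q) * (CARD('q) + 1))) (real (2 * CARD('p) * CARD('q))) / (\<epsilon>^2 * \<delta>)"
  shows "(\<Sum>\<omega>\<in>(UNIV::('n \<Rightarrow> 'm \<times> bool) set).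
      (norm (transpose W ** Dmat \<omega> ** W)^2 + norm (transpose W ** Dmat \<omega> ** U)^2) / \<epsilon>^2
      + real CARD('p) * (norm (transpose W *v (Dmat \<omega> *v e1))^2 + norm (transpose U *v (Dmat \<omega> *v e2))^2)
        / (\<epsilon>^2 * norm e^2))
    \<le> 4 * \<delta> * real (card (UNIV::('n \<Rightarrow> 'm \<times> bool) set))"
proof -
  define N where "N = real (card (UNIV::('n \<Rightarrow> 'm \<times> bool) set))"
  define m where "m = real CARD('m)"
  define Nm where "Nm = N / m"
  define p where "p = real CARD('p)"
  define q where "q = real CARD('q)"
  have m0: "m > 0" unfolding m_def by simp
  have N0: "N \<ge> 0" unfolding N_def by simp
  have Nm0: "Nm \<ge> 0" unfolding Nm_def using m0 N0 by simp
  have p0: "p \<ge> 0" unfolding p_def by simp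
  have pq': "p \<le> q" unfolding p_def q_def using pq by simp
  define S1 where "S1 = (\<Sum>\<omega>\<in>(UNIV::('n \<Rightarrow> 'm \<times> bool) set). norm (transpose W ** Dmat \<omega> ** W)^2)"
  define S2 where "S2 = (\<Sum>\<omega>\<in>(UNIV::('n \<Rightarrow> 'm \<times> bool) set). norm (transpose W ** Dmat \<omega> ** U)^2)"
  define S3 where "S3 = (\<Sum>\<omega>\<in>(UNIV::('n \<Rightarrow> 'm \<times> bool) set). norm (transpose W *v (Dmat \<omega> *v e1))^2)"
  define S5 where "S5 = (\<Sum>\<omega>\<in>(UNIV::('n \<Rightarrow> 'm \<times> bool) set). norm (transpose U *v (Dmat \<omega> *v e2))^2)"
  have nW: "norm W^2 = q" unfolding q_def by (rule orth_frob[OF WW])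
  have nU: "norm U^2 = p" unfolding p_def by (rule orth_frob[OF UU])
  have S1b: "S1 \<le> 2 * Nm * q * q" using exp_mm[of W W] unfolding S1_def Nm_def N_def m_def nW .
  have S2b: "S2 \<le> 2 * Nm * q * p" using exp_mm[of W U] unfolding S2_def Nm_def N_def m_def nW nU .
  have S3b: "S3 \<le> 2 * Nm * q * norm e1^2" using exp_mv[of W e1] unfolding S3_def Nm_def N_def m_def nW .
  have S5b: "S5 \<le> 2 * Nm * p * norm e2^2" using exp_mv[of U e2] unfolding S5_def Nm_def N_def m_def nU .
  have sum_eq: "(\<Sum>\<omega>\<in>(UNIV::('n \<Rightarrow> 'm \<times> bool) set).
      (norm (transpose W ** Dmat \<omega> ** W)^2 + norm (transpose W ** Dmat \<omega> ** U)^2) / \<epsilon>^2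
      + real CARD('p) * (norm (transpose W *v (Dmat \<omega> *v e1))^2 + norm (transpose U *v (Dmat \<omega> *v e2))^2)
        / (\<epsilon>^2 * norm e^2))
    = (S1 + S2) / \<epsilon>^2 + p * (S3 + S5) / (\<epsilon>^2 * norm e^2)"
    unfolding S1_def S2_def S3_def S5_def p_def by (rule sum_lin)
  have t1: "(S1 + S2) / \<epsilon>^2 \<le> 2 * Nm * (q * q + q * p) / \<epsilon>^2"
    by (rule divide_right_mono) (use S1b S2b in \<open>simp_all add: algebra_simps\<close>)
  have t2: "p * (S3 + S5) / (\<epsilon>^2 * norm e^2) \<le> 2 * Nm * (p * q) / \<epsilon>^2"
  proof (cases "e = 0")
    case True
    have "0 \<le> 2 * Nm * (p * q) / \<epsilon>^2"
      by (intro divide_nonneg_nonneg mult_nonneg_nonneg) (use Nm0 p0 in \<open>auto simp: q_def\<close>)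
    then show ?thesis using True by simp
  next
    case False
    then have ne: "norm e^2 > 0" by simp
    have "p * (S3 + S5) \<le> p * (2 * Nm * q * norm e1^2 + 2 * Nm * p * norm e2^2)"
      by (rule mult_left_mono) (use S3b S5b p0 in auto)
    also have "\<dots> \<le> p * (2 * Nm * q * norm e1^2 + 2 * Nm * q * norm e2^2)"
      by (intro mult_left_mono add_left_mono mult_right_mono) (use p0 pq' Nm0 in auto)
    also have "\<dots> = 2 * Nm * (p * q) * norm e^2" using pyth by (simp add: algebra_simps flip: pyth)
    finally have "p * (S3 + S5) \<le> 2 * Nm * (p * q) * norm e^2" .
    then have "p * (S3 + S5) / (\<epsilon>^2 * norm e^2) \<le> 2 * Nm * (p * q) * norm e^2 / (\<epsilon>^2 * norm e^2)"
      by (rule divide_right_mono) (use ne in simp)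
    also have "\<dots> = 2 * Nm * (p * q) / \<epsilon>^2" using ne by (simp add: field_simps)
    finally show ?thesis .
  qed
  define Mx where "Mx = max (real (CARD('q) * (CARD('q) + 1))) (real (2 * CARD('p) * CARD('q)))"
  have ed: "\<epsilon>^2 * \<delta> > 0" using e0 d0 by simp
  have "Mx / (\<epsilon>^2 * \<delta>) \<le> m" using mbig unfolding Mx_def m_def .
  then have Mxb: "Mx \<le> m * (\<epsilon>^2 * \<delta>)" using ed by (simp add: pos_divide_le_eq)
  have qq: "q * q + 2 * (p * q) \<le> 2 * Mx"
  proof -
    have "q * q \<le> q * (q + 1)" unfolding q_def by simp
    also have "\<dots> \<le> Mx" unfolding Mx_def q_def by (simp add: algebra_simps)
    finally have a: "q * q \<le> Mx" .
    have "2 * (p * q) \<le> Mx" unfolding Mx_def p_def q_def by simp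
    then show ?thesis using a by linarith
  qed
  have "(S1 + S2) / \<epsilon>^2 + p * (S3 + S5) / (\<epsilon>^2 * norm e^2) \<le> 2 * Nm * (q * q + q * p) / \<epsilon>^2 + 2 * Nm * (p * q) / \<epsilon>^2"
    using t1 t2 by linarith
  also have "\<dots> = 2 * Nm * (q * q + 2 * (p * q)) / \<epsilon>^2" by (simp add: algebra_simps add_divide_distrib)
  also have "\<dots> \<le> 2 * Nm * (2 * (m * (\<epsilon>^2 * \<delta>))) / \<epsilon>^2"
    by (intro divide_right_mono mult_left_mono) (use qq Mxb Nm0 in auto)
  also have "\<dots> = 4 * \<delta> * N" unfolding Nm_def using m0 e0 by (simp add: field_simps)
  finally show ?thesis unfolding sum_eq N_def .
qed


lemma final_arith:
  fixes Pt C G N \<delta> :: real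
  assumes "Pt = C / N" "G \<le> C" "(1 - \<delta>) * N \<le> G" "N > 0"
  shows "Pt \<ge> 1 - \<delta>"
proof -
  have "(1 - \<delta>) * N \<le> C" using assms(2,3) by linarith
  then have "1 - \<delta> \<le> C / N" using assms(4) by (simp add: pos_le_divide_eq)
  then show ?thesis using assms(1) by simp
qed

theorem theoremB1:
  fixes y :: "real^'n::finite" and X :: "real^'p::finite^'n" and Z :: "real^'q::finite^'n"
    and UX :: "real^'p^'n" and SX VX :: "real^'p^'p"
    and UZ :: "real^'q^'n" and SZ VZ :: "real^'q^'q"
    and \<delta> \<epsilon> :: real
  assumes "invertible (transpose Z ** Z)"
    and "invertible (transpose X ** proj Z ** X)"
    and "thin_svd X UX SX VX" and "thin_svd Z UZ SZ VZ"
    and "0 < \<delta>" "\<delta> < 1" "0 < \<epsilon>" "\<epsilon> \<le> 1/3"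
    and "real CARD('m::finite) \<ge>
           max (real (CARD('q) * (CARD('q) + 1))) (real (2 * CARD('p) * CARD('q))) / (\<epsilon>^2 * \<delta>)"
    and "(sigma_min (transpose UZ ** UX))^2 \<ge> 16 * \<epsilon> * (1 + \<epsilon>) / (1 - \<epsilon>)"
  shows "measure_pmf.prob (countsketch_pmf :: ('n \<Rightarrow> 'm \<times> bool) pmf)
     {\<omega>. let S = countsketch_matrix \<omega>;
           Xt = S ** X; Zt = S ** Z; yt = S *v y;
           e = y - X *v tsls y X Z;
           \<sigma>s = 1 / (sigma_min X * (sigma_min (transpose UZ ** UX))^2)
       in invertible (transpose Zt ** Zt) \<and> invertible (transpose Xt ** proj Zt ** Xt) \<and>
          norm (tsls yt Xt Zt - tsls y X Z)
            \<le> 4 * \<epsilon> / (1 - \<epsilon>) * (2 + 3 * norm e / sqrt (real CARD('p))) * \<sigma>s}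
     \<ge> 1 - \<delta>"
proof -
  note iZZ = assms(1) and iK0 = assms(2)
  have UU: "transpose UX ** UX = mat 1" and XS: "X = UX ** SX ** transpose VX"
    using assms(3) unfolding thin_svd_def by auto
  have WW: "transpose UZ ** UZ = mat 1" and ZS: "Z = UZ ** SZ ** transpose VZ"
    using assms(4) unfolding thin_svd_def by auto
  define T where "T = SX ** transpose VX"
  define R where "R = SZ ** transpose VZ"
  have XT: "X = UX ** T" using XS by (simp add: T_def matrix_mul_assoc)
  have ZR: "Z = UZ ** R" using ZS by (simp add: R_def matrix_mul_assoc)
  have injZ: "v = 0" if "Z *v v = 0" for v
  proof -
    have "(transpose Z ** Z) *v v = 0" using that by (simp add: matrix_vector_mul_assoc[symmetric])
    then show ?thesis by (rule inv_inj[OF iZZ])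
  qed
  have iR: "invertible R"
  proof (rule inj_invertible)
    fix v assume "R *v v = 0"
    then have "Z *v v = 0" unfolding ZR by (simp add: matrix_vector_mul_assoc[symmetric])
    then show "v = 0" by (rule injZ)
  qed
  have injX: "v = 0" if "X *v v = 0" for v
  proof -
    have "(transpose X ** proj Z ** X) *v v = 0" using that by (simp add: matrix_vector_mul_assoc[symmetric])
    then show ?thesis by (rule inv_inj[OF iK0])
  qed
  have iT: "invertible T"
  proof (rule inj_invertible)
    fix v assume "T *v v = 0"
    then have "X *v v = 0" unfolding XT by (simp add: matrix_vector_mul_assoc[symmetric])
    then show "v = 0" by (rule injX)
  qed
  have projZ: "proj Z = UZ ** transpose UZ"
  proof -
    have "proj (UZ ** R) = UZ ** matrix_inv (transpose UZ ** UZ) ** transpose UZ"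
      by (rule proj_mul[OF _ iR]) (simp add: WW mat1_inv)
    then show ?thesis unfolding ZR WW mat1_inv by simp
  qed
  define bh where "bh = tsls y X Z"
  define e where "e = y - X *v bh"
  define K0 where "K0 = transpose X ** proj Z ** X"
  have normal: "(transpose X ** proj Z) *v e = 0"
  proof -
    have "K0 *v bh = (K0 ** matrix_inv K0) *v ((transpose X ** proj Z) *v y)"
      unfolding bh_def tsls_def K0_def by (simp add: matrix_vector_mul_assoc matrix_mul_assoc)
    then have "K0 *v bh = (transpose X ** proj Z) *v y" using minv(1)[OF iK0] unfolding K0_def by simp
    moreover have "(transpose X ** proj Z) *v (X *v bh) = K0 *v bh"
      unfolding K0_def by (simp add: matrix_vector_mul_assoc)
    ultimately show ?thesis unfolding e_def by (simp add: matrix_vector_mult_diff_distrib)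
  qed
  have XPf: "transpose X ** proj Z = transpose T ** (transpose UX ** UZ ** transpose UZ)"
    unfolding XT projZ by (simp add: matrix_transpose_mul matrix_mul_assoc)
  have ne: "transpose UX *v (UZ *v (transpose UZ *v e)) = 0"
  proof -
    have "transpose T *v (transpose UX *v (UZ *v (transpose UZ *v e))) = (transpose T ** (transpose UX ** UZ ** transpose UZ)) *v e"
      by (simp only: matrix_vector_mul_assoc matrix_mul_assoc)
    also have "\<dots> = 0" using normal unfolding XPf .
    finally have "transpose T *v (transpose UX *v (UZ *v (transpose UZ *v e))) = 0" .
    then show ?thesis by (rule inv_inj[OF transpose_invertible[OF iT]])
  qed
  have pq: "CARD('p) \<le> CARD('q)"
  proof (rule card_le_inj[of "transpose UZ ** UX"])
    fix x assume x: "(transpose UZ ** UX) *v x = 0"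
    define z where "z = matrix_inv T *v x"
    have Tz: "T *v z = x" unfolding z_def using minv(1)[OF iT] by (simp add: matrix_vector_mul_assoc)
    have "(transpose X ** proj Z ** X) *v z = transpose T *v (transpose UX *v (UZ *v ((transpose UZ ** UX) *v (T *v z))))"
      unfolding XPf by (subst XT) (simp add: matrix_vector_mul_assoc matrix_mul_assoc)
    also have "\<dots> = 0" using x Tz by simp
    finally have "z = 0" by (rule inv_inj[OF iK0])
    then show "x = 0" using Tz by simp
  qed
  define s where "s = sigma_min (transpose UZ ** UX)"
  have s_nn: "s \<ge> 0" unfolding s_def by (rule sigma_min_nonneg)
  have es: "16 * \<epsilon> \<le> s^2"
  proof -
    have "16 * \<epsilon> * 1 \<le> 16 * \<epsilon> * ((1 + \<epsilon>) / (1 - \<epsilon>))"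
      by (rule mult_left_mono) (use assms(7,8) in auto)
    then show ?thesis using assms(10) unfolding s_def by simp
  qed
  have s0: "s > 0"
  proof -
    have "s^2 > 0" using es assms(7) by linarith
    then show ?thesis using s_nn by (simp add: less_le)
  qed
  have slow: "s * norm x \<le> norm ((transpose UZ ** UX) *v x)" for x
    unfolding s_def by (rule sigma_min_le)
  have s1: "s^2 \<le> 1"
  proof -
    obtain i :: 'p where True by blast
    let ?x = "axis i (1::real)"
    have "s * norm ?x \<le> norm ((transpose UZ ** UX) *v ?x)" by (rule slow)
    also have "\<dots> = norm (transpose UZ *v (UX *v ?x))" by (simp add: matrix_vector_mul_assoc)
    also have "\<dots> \<le> norm (UX *v ?x)" by (rule bessel[OF WW])
    also have "\<dots> = 1" by (simp add: orth_norm[OF UU])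
    finally have "s \<le> 1" by simp
    then show ?thesis using s_nn by (simp add: power_le_one)
  qed
  define \<sigma>X where "\<sigma>X = sigma_min X"
  have sX0: "\<sigma>X > 0" unfolding \<sigma>X_def by (rule sigma_min_pos) (rule injX)
  have sXlow: "\<sigma>X * norm x \<le> norm (X *v x)" for x unfolding \<sigma>X_def by (rule sigma_min_le)
  define e2 where "e2 = UZ *v (transpose UZ *v e)"
  define e1 where "e1 = e - e2"
  have pyth: "norm e1^2 + norm e2^2 = norm e^2"
  proof -
    have "inner e2 e1 = 0"
    proof -
      have "inner e2 e = inner (transpose UZ *v e) (transpose UZ *v e)"
        unfolding e2_def by (simp add: inner_mv)
      moreover have "inner e2 e2 = inner (transpose UZ *v e) (transpose UZ *v e)"
        unfolding e2_def by (simp add: inner_mv matrix_vector_mul_assoc WW)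
      ultimately show ?thesis unfolding e1_def by (simp add: inner_diff_right)
    qed
    moreover have "e = e1 + 1 *\<^sub>R e2" unfolding e1_def by simp
    ultimately show ?thesis using norm_add_scale_sq[of e1 1 e2] by simp
  qed
  define Tf where "Tf \<omega> = (norm (transpose UZ ** Dmat \<omega> ** UZ)^2 + norm (transpose UZ ** Dmat \<omega> ** UX)^2) / \<epsilon>^2
      + real CARD('p) * (norm (transpose UZ *v (Dmat \<omega> *v e1))^2 + norm (transpose UX *v (Dmat \<omega> *v e2))^2)
        / (\<epsilon>^2 * norm e^2)" for \<omega> :: "'n \<Rightarrow> 'm \<times> bool"
  have sumb: "(\<Sum>\<omega>\<in>UNIV. Tf \<omega>) \<le> 4 * \<delta> * real CARD('n \<Rightarrow> 'm \<times> bool)"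
    unfolding Tf_def by (rule exp_total[OF WW UU pyth pq assms(7) assms(5) assms(9)])
  have nn: "Tf \<omega> \<ge> 0" for \<omega> unfolding Tf_def by simp
  have cgood: "real (card {\<omega>. Tf \<omega> < 4}) \<ge> (1 - \<delta>) * real CARD('n \<Rightarrow> 'm \<times> bool)"
    by (rule markov_card[OF nn sumb])
  let ?target = "{\<omega>::'n \<Rightarrow> 'm \<times> bool. let S = countsketch_matrix \<omega>;
           Xt = S ** X; Zt = S ** Z; yt = S *v y;
           e = y - X *v tsls y X Z;
           \<sigma>s = 1 / (sigma_min X * (sigma_min (transpose UZ ** UX))^2)
       in invertible (transpose Zt ** Zt) \<and> invertible (transpose Xt ** proj Zt ** Xt) \<and>
          norm (tsls yt Xt Zt - tsls y X Z)
            \<le> 4 * \<epsilon> / (1 - \<epsilon>) * (2 + 3 * norm e / sqrt (real CARD('p))) * \<sigma>s}"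
  have sub: "{\<omega>. Tf \<omega> < 4} \<subseteq> ?target"
  proof
    fix \<omega> :: "'n \<Rightarrow> 'm \<times> bool"
    assume "\<omega> \<in> {\<omega>. Tf \<omega> < 4}"
    then have T4: "Tf \<omega> < 4" by simp
    define Q1 where "Q1 = norm (transpose UZ ** Dmat \<omega> ** UZ)"
    define Q2 where "Q2 = norm (transpose UZ ** Dmat \<omega> ** UX)"
    define Q3 where "Q3 = norm (transpose UZ *v (Dmat \<omega> *v e1))"
    define Q5 where "Q5 = norm (transpose UX *v (Dmat \<omega> *v e2))"
    define rest where "rest = real CARD('p) * (Q3^2 + Q5^2) / (\<epsilon>^2 * norm e^2)"
    have rest0: "rest \<ge> 0" unfolding rest_def by simp
    have Tfe: "Tf \<omega> = (Q1^2 + Q2^2) / \<epsilon>^2 + rest" unfolding Tf_def Q1_def Q2_def Q3_def Q5_def rest_def ..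
    have e2p: "\<epsilon>^2 > 0" using assms(7) by simp
    have "(Q1^2 + Q2^2) / \<epsilon>^2 < 4" using T4 rest0 Tfe by linarith
    then have Q12: "Q1^2 + Q2^2 < 4 * \<epsilon>^2" using e2p by (simp add: pos_divide_less_eq)
    have sq2: "(2*\<epsilon>)^2 = 4 * \<epsilon>^2" by (simp add: power_mult_distrib)
    have nQ1: "Q1 \<le> 2 * \<epsilon>"
    proof -
      have "Q1^2 \<le> (2*\<epsilon>)^2" using Q12 sq2 by (smt (verit) zero_le_power2)
      then show ?thesis by (rule power2_le_imp_le) (use assms(7) in simp)
    qed
    have nQ2: "Q2 \<le> 2 * \<epsilon>"
    proof -
      have "Q2^2 \<le> (2*\<epsilon>)^2" using Q12 sq2 by (smt (verit) zero_le_power2)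
      then show ?thesis by (rule power2_le_imp_le) (use assms(7) in simp)
    qed
    have Q35: "Q3 + Q5 \<le> 3 * \<epsilon> * norm e / sqrt (real CARD('p))"
    proof (cases "e = 0")
      case True
      then have "e1 = 0" "e2 = 0" unfolding e1_def e2_def by simp_all
      then show ?thesis using True unfolding Q3_def Q5_def by simp
    next
      case False
      define pp where "pp = real CARD('p)"
      have pp0: "pp > 0" unfolding pp_def by simp
      have ne0: "norm e^2 > 0" using False by simp
      have "rest < 4" using T4 Tfe Q12 e2p
        by (smt (verit) divide_nonneg_pos zero_le_power2)
      then have "pp * (Q3^2 + Q5^2) < 4 * (\<epsilon>^2 * norm e^2)"
        unfolding rest_def pp_def[symmetric] using e2p ne0 by (simp add: pos_divide_less_eq)
      then have QQ: "Q3^2 + Q5^2 < 4 * \<epsilon>^2 * norm e^2 / pp"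
        using pp0 by (simp add: pos_less_divide_eq mult.commute mult.left_commute)
      have "(Q3 + Q5)^2 \<le> 2 * (Q3^2 + Q5^2)"
        using sum_squares_bound[of Q3 Q5] by (simp add: power2_eq_square algebra_simps)
      also have "\<dots> \<le> 9 * \<epsilon>^2 * norm e^2 / pp"
      proof -
        have "2 * (Q3^2 + Q5^2) \<le> 8 * \<epsilon>^2 * norm e^2 / pp" using QQ by simp
        also have "\<dots> \<le> 9 * \<epsilon>^2 * norm e^2 / pp"
          by (rule divide_right_mono) (use pp0 in simp_all)
        finally show ?thesis .
      qed
      also have "\<dots> = (3 * \<epsilon> * norm e / sqrt pp)^2"
        using pp0 by (simp add: power_divide power_mult_distrib)
      finally have "(Q3 + Q5)^2 \<le> (3 * \<epsilon> * norm e / sqrt pp)^2" .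
      then show ?thesis unfolding pp_def[symmetric]
        by (rule power2_le_imp_le) (use assms(7) pp0 in simp)
    qed
    have DE: "invertible (transpose (countsketch_matrix \<omega> ** Z) ** (countsketch_matrix \<omega> ** Z)) \<and>
     invertible (transpose (countsketch_matrix \<omega> ** X) ** proj (countsketch_matrix \<omega> ** Z) ** (countsketch_matrix \<omega> ** X)) \<and>
     norm (tsls (countsketch_matrix \<omega> *v y) (countsketch_matrix \<omega> ** X) (countsketch_matrix \<omega> ** Z) - tsls y X Z)
       \<le> 12 * \<epsilon> * norm e / sqrt (real CARD('p)) / (\<sigma>X * s^2)"
      by (rule det_event[OF XT ZR UU WW iT iR ne _ s0 slow es s1 assms(7) sX0 sXlow])
         (use nQ1 nQ2 Q35 in \<open>simp_all add: e_def bh_def Q1_def Q2_def Q3_def Q5_def e1_def e2_def\<close>)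
    have fin: "12 * \<epsilon> * norm e / sqrt (real CARD('p)) / (\<sigma>X * s^2)
        \<le> 4 * \<epsilon> / (1 - \<epsilon>) * (2 + 3 * norm e / sqrt (real CARD('p))) * (1 / (\<sigma>X * s^2))"
    proof -
      have c0: "1 / (\<sigma>X * s^2) > 0" using sX0 s0 by simp
      have "4 * \<epsilon> \<le> 4 * \<epsilon> / (1 - \<epsilon>)" using assms(7,8) by (simp add: field_simps)
      moreover have "3 * norm e / sqrt (real CARD('p)) \<le> 2 + 3 * norm e / sqrt (real CARD('p))" by simp
      ultimately have "4 * \<epsilon> * (3 * norm e / sqrt (real CARD('p))) \<le> 4 * \<epsilon> / (1 - \<epsilon>) * (2 + 3 * norm e / sqrt (real CARD('p)))"
        by (intro mult_mono) (use assms(7) in simp_all)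
      then have "4 * \<epsilon> * (3 * norm e / sqrt (real CARD('p))) * (1 / (\<sigma>X * s^2))
          \<le> 4 * \<epsilon> / (1 - \<epsilon>) * (2 + 3 * norm e / sqrt (real CARD('p))) * (1 / (\<sigma>X * s^2))"
        by (rule mult_right_mono) (use c0 in simp)
      moreover have "12 * \<epsilon> * norm e / sqrt (real CARD('p)) / (\<sigma>X * s^2) = 4 * \<epsilon> * (3 * norm e / sqrt (real CARD('p))) * (1 / (\<sigma>X * s^2))"
        by simp
      ultimately show ?thesis by simp
    qed
    show "\<omega> \<in> ?target"
      using DE fin unfolding Let_def e_def bh_def \<sigma>X_def s_def by simp
  qed
  have Pt: "measure_pmf.prob (countsketch_pmf :: ('n \<Rightarrow> 'm \<times> bool) pmf) ?target
      = real (card ?target) / real CARD('n \<Rightarrow> 'm \<times> bool)"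
    unfolding countsketch_pmf_def by (subst measure_pmf_of_set) auto
  have GC: "real (card {\<omega>. Tf \<omega> < 4}) \<le> real (card ?target)"
    using sub by (simp add: card_mono)
  have N0: "real CARD('n \<Rightarrow> 'm \<times> bool) > 0" by simp
  show ?thesis by (rule final_arith[OF Pt GC cgood N0])
qed


end
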